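(* Let $M$ be a minimal dominating set of a finite tree $T$, let $X\subseteq N_2(M)$, and let $A_2=N(X)\cap a_2(M)$. Suppose that $A_2\cup X$ induces a connected subtree of $T$ and that $X$ is an independent set in $T$. Then Algorithm 2 (described below), applied to $T$, $M$ and $X$, terminates with a minimal dominating set $M'$ of $T$ satisfying $|M'|\ge |M|-|A_2|+|X|$. Algorithm 2: set $A=N(X)\cap a(M)$, $A_2=N(X)\cap a_2(M)$, $N=N(A)\cap N_1(M)$, and $M'=((M\cup X)\setminus A)\cup N$. Then for each $x\in X$ in turn: root $T$ at $x$; let $T_x$ be the subtree of $T$ obtained by removing the vertices of $A_2$ together with all their descendants (with respect to the root $x$); let $M'_x=M'\cap V(T_x)$; let $M''_x$ be the output of Algorithm 1 applied to $T_x$ rooted at $x$ and the set $M'_x$; replace $M'$ by $(M'\setminus M'_x)\cup M''_x$. Finally return $M'$. Algorithm 1 (input: a finite tree rooted at a vertex and a dominating set $M_0$ of it): set $i=0$; while $M_i$ is not a minimal dominating set: choose a supported vertex $u_i\in M_i\setminus a(M_i)$ of least depth; let $A_{i+1}$ be the set of vertices of $a_1(M_i)$ adjacent to $u_i$; let $N_{i+1}$ be the set of vertices of $N_1(M_i)$ adjacent to a vertex of $A_{i+1}$; set $M_{i+1}=(M_i\setminus A_{i+1})\cup N_{i+1}$ and increase $i$ by one. When the loop ends, return $M_i$.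
   Context: A dominating set of a graph $G=(V,E)$ is a set $S\subseteq V$ such that every vertex is in $S$ or adjacent to a vertex of $S$; it is minimal if no proper subset is dominating. $N(u)$ and $N[u]=N(u)\cup\{u\}$ are open/closed neighbourhoods; $N(X)=\bigcup_{x\in X}N(x)$. For a dominating set $S$ (of the relevant tree): $a(S)=\{u\in S: S\setminus\{u\}\text{ is not dominating}\}$ (critical vertices); vertices of $S\setminus a(S)$ are supported; $N_1(S)=\{u\in V\setminus S: |N[u]\cap S|=1\}$; $N_2(S)=\{u\in V\setminus S: |N[u]\cap S|\ge 2\}$; $a_1(S)=\{u\in a(S): N[u]\cap N_1(S)\ne\emptyset\}$; $a_2(S)=\{u\in a(S): N[u]\cap N_1(S)=\emptyset\}$. In a rooted tree, depth is distance to the root and $y$ is a descendant of $z$ if $z$ lies on the path from $y$ to the root. *)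

theory Defs
  imports Main
begin

text \<open>Induced subgraphs are given by restricting the vertex set;
all notions below only look at E between vertices of the given vertex set.\<close>

definition nbr :: "'a set \<Rightarrow> ('a \<Rightarrow> 'a \<Rightarrow> bool) \<Rightarrow> 'a \<Rightarrow> 'a set" where
  "nbr V E u = {v \<in> V. E u v}"

definition cnbr :: "'a set \<Rightarrow> ('a \<Rightarrow> 'a \<Rightarrow> bool) \<Rightarrow> 'a \<Rightarrow> 'a set" where
  "cnbr V E u = insert u (nbr V E u)"

definition nbrs :: "'a set \<Rightarrow> ('a \<Rightarrow> 'a \<Rightarrow> bool) \<Rightarrow> 'a set \<Rightarrow> 'a set" where
  "nbrs V E X = (\<Union>x\<in>X. nbr V E x)"

definition walk :: "'a set \<Rightarrow> ('a \<Rightarrow> 'a \<Rightarrow> bool) \<Rightarrow> 'a list \<Rightarrow> bool" where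
  "walk V E xs \<longleftrightarrow> xs \<noteq> [] \<and> set xs \<subseteq> V \<and> successively E xs"

definition connected_graph :: "'a set \<Rightarrow> ('a \<Rightarrow> 'a \<Rightarrow> bool) \<Rightarrow> bool" where
  "connected_graph V E \<longleftrightarrow>
     (\<forall>u\<in>V. \<forall>v\<in>V. \<exists>xs. walk V E xs \<and> hd xs = u \<and> last xs = v)"

definition is_cycle :: "'a set \<Rightarrow> ('a \<Rightarrow> 'a \<Rightarrow> bool) \<Rightarrow> 'a list \<Rightarrow> bool" where
  "is_cycle V E xs \<longleftrightarrow> length xs \<ge> 3 \<and> distinct xs \<and> walk V E xs \<and> E (last xs) (hd xs)"

definition is_tree :: "'a set \<Rightarrow> ('a \<Rightarrow> 'a \<Rightarrow> bool) \<Rightarrow> bool" where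
  "is_tree V E \<longleftrightarrow> finite V \<and> V \<noteq> {}
     \<and> (\<forall>u\<in>V. \<forall>v\<in>V. E u v \<longleftrightarrow> E v u) \<and> (\<forall>u\<in>V. \<not> E u u)
     \<and> connected_graph V E \<and> \<not> (\<exists>xs. is_cycle V E xs)"

definition dominating :: "'a set \<Rightarrow> ('a \<Rightarrow> 'a \<Rightarrow> bool) \<Rightarrow> 'a set \<Rightarrow> bool" where
  "dominating V E S \<longleftrightarrow> S \<subseteq> V \<and> (\<forall>v\<in>V. v \<in> S \<or> (\<exists>s\<in>S. E v s))"

definition min_dominating :: "'a set \<Rightarrow> ('a \<Rightarrow> 'a \<Rightarrow> bool) \<Rightarrow> 'a set \<Rightarrow> bool" where
  "min_dominating V E S \<longleftrightarrow> dominating V E S \<and> (\<forall>S'. S' \<subset> S \<longrightarrow> \<not> dominating V E S')"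

text \<open>critical vertices a(S)\<close>
definition crit :: "'a set \<Rightarrow> ('a \<Rightarrow> 'a \<Rightarrow> bool) \<Rightarrow> 'a set \<Rightarrow> 'a set" where
  "crit V E S = {u \<in> S. \<not> dominating V E (S - {u})}"

definition N1 :: "'a set \<Rightarrow> ('a \<Rightarrow> 'a \<Rightarrow> bool) \<Rightarrow> 'a set \<Rightarrow> 'a set" where
  "N1 V E S = {u \<in> V - S. card (cnbr V E u \<inter> S) = 1}"

definition N2 :: "'a set \<Rightarrow> ('a \<Rightarrow> 'a \<Rightarrow> bool) \<Rightarrow> 'a set \<Rightarrow> 'a set" where
  "N2 V E S = {u \<in> V - S. card (cnbr V E u \<inter> S) \<ge> 2}"

definition a1 :: "'a set \<Rightarrow> ('a \<Rightarrow> 'a \<Rightarrow> bool) \<Rightarrow> 'a set \<Rightarrow> 'a set" where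
  "a1 V E S = {u \<in> crit V E S. cnbr V E u \<inter> N1 V E S \<noteq> {}}"

definition a2 :: "'a set \<Rightarrow> ('a \<Rightarrow> 'a \<Rightarrow> bool) \<Rightarrow> 'a set \<Rightarrow> 'a set" where
  "a2 V E S = {u \<in> crit V E S. cnbr V E u \<inter> N1 V E S = {}}"

definition depth :: "'a set \<Rightarrow> ('a \<Rightarrow> 'a \<Rightarrow> bool) \<Rightarrow> 'a \<Rightarrow> 'a \<Rightarrow> nat" where
  "depth V E r v = (LEAST n. \<exists>xs. walk V E xs \<and> hd xs = v \<and> last xs = r \<and> length xs = Suc n)"

definition descendant :: "'a set \<Rightarrow> ('a \<Rightarrow> 'a \<Rightarrow> bool) \<Rightarrow> 'a \<Rightarrow> 'a \<Rightarrow> 'a \<Rightarrow> bool" where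
  "descendant V E r y z \<longleftrightarrow>
     (\<exists>xs. walk V E xs \<and> distinct xs \<and> hd xs = y \<and> last xs = r \<and> z \<in> set xs)"

subsection \<open>Algorithm 1 (nondeterministic: any supported vertex of least depth may be chosen)\<close>

definition alg1_step :: "'a set \<Rightarrow> ('a \<Rightarrow> 'a \<Rightarrow> bool) \<Rightarrow> 'a \<Rightarrow> 'a set \<Rightarrow> 'a set \<Rightarrow> bool" where
  "alg1_step V E r M M' \<longleftrightarrow> \<not> min_dominating V E M \<and>
     (\<exists>u. u \<in> M - crit V E M \<and> (\<forall>w \<in> M - crit V E M. depth V E r u \<le> depth V E r w) \<and>
        (let A = {v \<in> a1 V E M. E u v};
             N = {w \<in> N1 V E M. \<exists>v\<in>A. E w v}
         in M' = (M - A) \<union> N))"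

inductive alg1_result :: "'a set \<Rightarrow> ('a \<Rightarrow> 'a \<Rightarrow> bool) \<Rightarrow> 'a \<Rightarrow> 'a set \<Rightarrow> 'a set \<Rightarrow> bool"
  for V E r where
  stop: "min_dominating V E M \<Longrightarrow> alg1_result V E r M M"
| step: "alg1_step V E r M M1 \<Longrightarrow> alg1_result V E r M1 Mf \<Longrightarrow> alg1_result V E r M Mf"

definition alg1_terminates :: "'a set \<Rightarrow> ('a \<Rightarrow> 'a \<Rightarrow> bool) \<Rightarrow> 'a \<Rightarrow> 'a set \<Rightarrow> bool" where
  "alg1_terminates V E r M \<longleftrightarrow>
     \<not> (\<exists>f. f 0 = M \<and> (\<forall>i. alg1_step V E r (f i) (f (Suc i))))"

definition sub_vertices :: "'a set \<Rightarrow> ('a \<Rightarrow> 'a \<Rightarrow> bool) \<Rightarrow> 'a set \<Rightarrow> 'a \<Rightarrow> 'a set" where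
  "sub_vertices V E A2 x = {y \<in> V. \<not> (\<exists>z\<in>A2. descendant V E x y z)}"

definition alg2_init :: "'a set \<Rightarrow> ('a \<Rightarrow> 'a \<Rightarrow> bool) \<Rightarrow> 'a set \<Rightarrow> 'a set \<Rightarrow> 'a set" where
  "alg2_init V E M X =
     (let A = nbrs V E X \<inter> crit V E M;
          N = nbrs V E A \<inter> N1 V E M
      in ((M \<union> X) - A) \<union> N)"

text \<open>The loop over X processed in the order of the list xs.\<close>
inductive alg2_loop :: "'a set \<Rightarrow> ('a \<Rightarrow> 'a \<Rightarrow> bool) \<Rightarrow> 'a set \<Rightarrow> 'a list \<Rightarrow> 'a set \<Rightarrow> 'a set \<Rightarrow> bool"
  for V E A2 where
  nil: "alg2_loop V E A2 [] M M"
| cons: "alg1_result (sub_vertices V E A2 x) E x (M \<inter> sub_vertices V E A2 x) Mx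
         \<Longrightarrow> alg2_loop V E A2 xs ((M - (M \<inter> sub_vertices V E A2 x)) \<union> Mx) Mf
         \<Longrightarrow> alg2_loop V E A2 (x # xs) M Mf"

fun alg2_loop_terminates :: "'a set \<Rightarrow> ('a \<Rightarrow> 'a \<Rightarrow> bool) \<Rightarrow> 'a set \<Rightarrow> 'a list \<Rightarrow> 'a set \<Rightarrow> bool" where
  "alg2_loop_terminates V E A2 [] M = True"
| "alg2_loop_terminates V E A2 (x # xs) M \<longleftrightarrow>
     alg1_terminates (sub_vertices V E A2 x) E x (M \<inter> sub_vertices V E A2 x) \<and>
     (\<forall>Mx. alg1_result (sub_vertices V E A2 x) E x (M \<inter> sub_vertices V E A2 x) Mx \<longrightarrow>
        alg2_loop_terminates V E A2 xs ((M - (M \<inter> sub_vertices V E A2 x)) \<union> Mx))"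

end

theory Submission
  imports Defs
begin



section \<open>Walks\<close>

definition symm :: "'a set \<Rightarrow> ('a \<Rightarrow> 'a \<Rightarrow> bool) \<Rightarrow> bool" where
  "symm V E \<longleftrightarrow> (\<forall>u\<in>V. \<forall>v\<in>V. E u v \<longleftrightarrow> E v u)"

lemma walk_Cons: "walk V E (x # xs) \<longleftrightarrow> x \<in> V \<and> (xs = [] \<or> (E x (hd xs) \<and> walk V E xs))"
  by (cases xs) (auto simp: walk_def)

lemma walk_single[simp]: "walk V E [x] \<longleftrightarrow> x \<in> V"
  by (simp add: walk_def)

lemma walk_Cons2: "walk V E (x # y # xs) \<longleftrightarrow> x \<in> V \<and> E x y \<and> walk V E (y # xs)"
  by (auto simp: walk_def)

lemma walk_append: "walk V E xs \<Longrightarrow> walk V E ys \<Longrightarrow> E (last xs) (hd ys) \<Longrightarrow> walk V E (xs @ ys)"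
  by (auto simp: walk_def successively_append_iff)

lemma walk_appendD1: "walk V E (xs @ ys) \<Longrightarrow> xs \<noteq> [] \<Longrightarrow> walk V E xs"
  by (auto simp: walk_def successively_append_iff)

lemma walk_appendD2: "walk V E (xs @ ys) \<Longrightarrow> ys \<noteq> [] \<Longrightarrow> walk V E ys"
  by (auto simp: walk_def successively_append_iff)

lemma walk_append_last: "walk V E (xs @ ys) \<Longrightarrow> xs \<noteq> [] \<Longrightarrow> ys \<noteq> [] \<Longrightarrow> E (last xs) (hd ys)"
  by (auto simp: walk_def successively_append_iff)

lemma walk_mono: "walk V E xs \<Longrightarrow> set xs \<subseteq> W \<Longrightarrow> walk W E xs"
  by (auto simp: walk_def)

lemma walk_subset: "walk V E xs \<Longrightarrow> set xs \<subseteq> V"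
  by (auto simp: walk_def)

lemma walk_nonempty: "walk V E xs \<Longrightarrow> xs \<noteq> []"
  by (auto simp: walk_def)

lemma walk_rev: "walk V E xs \<Longrightarrow> symm V E \<Longrightarrow> walk V E (rev xs)"
  unfolding walk_def symm_def
  by (auto intro: successively_mono)

lemma walk_edge: "walk V E xs \<Longrightarrow> Suc i < length xs \<Longrightarrow> E (xs ! i) (xs ! Suc i)"
  by (auto simp: walk_def successively_nth)

lemma walk_to_path:
  assumes "walk V E xs"
  shows "\<exists>ys. walk V E ys \<and> distinct ys \<and> hd ys = hd xs \<and> last ys = last xs
           \<and> set ys \<subseteq> set xs \<and> length ys \<le> length xs"
  using assms
proof (induction "length xs" arbitrary: xs rule: less_induct)
  case less
  show ?case
  proof (cases "distinct xs")
    case True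
    then show ?thesis using less.prems by auto
  next
    case False
    then obtain as bs cs y where xs: "xs = as @ [y] @ bs @ [y] @ cs"
      using not_distinct_decomp by blast
    define zs where "zs = as @ [y] @ cs"
    have w1: "walk V E (as @ [y])"
      using less.prems xs walk_appendD1[of V E "as @ [y]" "bs @ [y] @ cs"] by auto
    have w2: "walk V E ([y] @ cs)"
      using less.prems xs walk_appendD2[of V E "as @ [y] @ bs" "[y] @ cs"] by auto
    have wz: "walk V E zs"
    proof (cases as)
      case Nil then show ?thesis using w2 zs_def by simp
    next
      case (Cons a as')
      have "walk V E (as @ [y] @ cs)"
      proof (cases cs)
        case Nil then show ?thesis using w1 by simp
      next
        case (Cons c cs')
        have "E y c" using w2 Cons by (simp add: walk_Cons2)
        then show ?thesis using w1 w2 walk_append[of V E "as @ [y]" cs] Cons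
          by (simp add: walk_Cons)
      qed
      then show ?thesis by (simp add: zs_def)
    qed
    have "length zs < length xs" using xs zs_def by simp
    then obtain ys where ys: "walk V E ys \<and> distinct ys \<and> hd ys = hd zs \<and> last ys = last zs
           \<and> set ys \<subseteq> set zs \<and> length ys \<le> length zs"
      using less.hyps wz by blast
    have "hd zs = hd xs" using xs zs_def by (cases as) auto
    moreover have "last zs = last xs" using xs zs_def by (cases cs) auto
    moreover have "set zs \<subseteq> set xs" using xs zs_def by auto
    ultimately show ?thesis using ys \<open>length zs < length xs\<close>
      by (intro exI[where x=ys]) auto
  qed
qed




lemma symmD: "symm V E \<Longrightarrow> u \<in> V \<Longrightarrow> v \<in> V \<Longrightarrow> E u v \<Longrightarrow> E v u"
  unfolding symm_def by blast

lemma unique_path: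
  assumes nc: "\<not>(\<exists>cs. is_cycle V E cs)" and sy: "symm V E"
  shows "walk V E xs \<Longrightarrow> distinct xs \<Longrightarrow> walk V E ys \<Longrightarrow> distinct ys \<Longrightarrow>
     hd xs = hd ys \<Longrightarrow> last xs = last ys \<Longrightarrow> xs = ys"
proof (induction xs arbitrary: ys)
  case Nil
  then show ?case by (simp add: walk_def)
next
  case (Cons a xs')
  obtain ys' where ys: "ys = a # ys'"
    using Cons.prems by (cases ys) (auto simp: walk_def)
  show ?case
  proof (cases "xs' = []")
    case True
    then have "last ys = a" using Cons.prems by simp
    have "ys' = []"
    proof (rule ccontr)
      assume "ys' \<noteq> []"
      then have "last ys \<in> set ys'" using ys by simp
      moreover have "a \<notin> set ys'" using Cons.prems(4) ys by simp
      ultimately show False using \<open>last ys = a\<close> by simp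
    qed
    then show ?thesis using ys True by simp
  next
    case xne: False
    show ?thesis
    proof (cases "ys' = []")
      case True
      then have "last (a # xs') = a" using Cons.prems ys by simp
      moreover have "last (a # xs') \<in> set xs'" using xne by simp
      moreover have "a \<notin> set xs'" using Cons.prems(2) by simp
      ultimately have False by simp
      then show ?thesis ..
    next
      case yne: False
      have wx': "walk V E xs'" using Cons.prems(1) xne by (simp add: walk_Cons)
      have wy': "walk V E ys'" using Cons.prems(3) yne ys by (simp add: walk_Cons)
      have lx: "last xs' = last ys'" using Cons.prems(6) xne yne ys by simp
      show ?thesis
      proof (cases "hd xs' = hd ys'")
        case True
        then have "xs' = ys'" using Cons.IH[OF wx' _ wy' _ True lx] Cons.prems ys by simp
        then show ?thesis using ys by simp
      next
        case bc: False
        have "\<exists>y\<in>set ys'. y \<in> set xs'" using lx xne yne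
          by (metis last_in_set)
        then obtain ps q qs where ysp: "ys' = ps @ q # qs" and q: "q \<in> set xs'"
          and ps: "\<forall>y\<in>set ps. y \<notin> set xs'"
          by (auto elim!: split_list_first_propE)
        obtain us vs where xsp: "xs' = us @ q # vs" using q split_list by metis
        define cyc where "cyc = (a # us) @ rev (ps @ [q])"
        have d1: "distinct (a # xs')" using Cons.prems by simp
        have d2: "distinct (a # ys')" using Cons.prems ys by simp
        have dc: "distinct cyc"
          unfolding cyc_def using d1 d2 ps xsp ysp by auto
        have wa: "walk V E ((a # us) @ [q])"
          using Cons.prems(1) xsp walk_appendD1[of V E "(a # us) @ [q]" vs] by simp
        have wb: "walk V E (ps @ [q])"
          using wy' ysp walk_appendD1[of V E "ps @ [q]" qs] by simp
        have e1: "E (last (a # us)) q"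
          using walk_append_last[of V E "a # us" "[q]"] wa by simp
        have wc: "walk V E cyc"
          unfolding cyc_def
          apply (rule walk_append)
          using wa walk_appendD1[of V E "a # us" "[q]"] apply simp
          using walk_rev[OF wb sy] apply simp
          using e1 by simp
        have lc: "last cyc = hd ys'"
          unfolding cyc_def using ysp by (cases ps) auto
        have eac: "E a (hd ys')"
          using Cons.prems(3) ys yne by (simp add: walk_Cons)
        have "hd ys' \<in> V" using wy' yne by (auto simp: walk_def)
        moreover have "a \<in> V" using Cons.prems(1) by (simp add: walk_def)
        ultimately have eca: "E (last cyc) (hd cyc)"
          using symmD[OF sy _ _ eac] lc by (simp add: cyc_def)
        have "length cyc \<ge> 3"
        proof (rule ccontr)
          assume "\<not> 3 \<le> length cyc"
          then have "us = [] \<and> ps = []" unfolding cyc_def by (auto simp: Suc_le_eq)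
          then show False using bc xsp ysp by simp
        qed
        then have "is_cycle V E cyc" using dc wc eca by (simp add: is_cycle_def)
        then show ?thesis using nc by blast
      qed
    qed
  qed
qed




lemma tree_symm: "is_tree W E \<Longrightarrow> symm W E"
  by (simp add: is_tree_def symm_def)

lemma tree_irrefl: "is_tree W E \<Longrightarrow> u \<in> W \<Longrightarrow> \<not> E u u"
  by (simp add: is_tree_def)

lemma tree_nocycle: "is_tree W E \<Longrightarrow> \<not> (\<exists>cs. is_cycle W E cs)"
  by (simp add: is_tree_def)

lemma tree_conn: "is_tree W E \<Longrightarrow> u \<in> W \<Longrightarrow> v \<in> W \<Longrightarrow> \<exists>xs. walk W E xs \<and> hd xs = u \<and> last xs = v"
  by (simp add: is_tree_def connected_graph_def)

lemma tree_path: "is_tree W E \<Longrightarrow> u \<in> W \<Longrightarrow> v \<in> W \<Longrightarrow>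
   \<exists>xs. walk W E xs \<and> distinct xs \<and> hd xs = u \<and> last xs = v"
  using tree_conn walk_to_path by metis

lemma tree_unique_path: "is_tree W E \<Longrightarrow> walk W E xs \<Longrightarrow> distinct xs \<Longrightarrow> walk W E ys \<Longrightarrow> distinct ys \<Longrightarrow>
     hd xs = hd ys \<Longrightarrow> last xs = last ys \<Longrightarrow> xs = ys"
  using unique_path[OF tree_nocycle tree_symm] by blast

lemma depth_le:
  assumes "walk W E xs" "hd xs = v" "last xs = r"
  shows "Suc (depth W E r v) \<le> length xs"
proof -
  have "length xs = Suc (length xs - 1)" using assms walk_nonempty by fastforce
  then have "depth W E r v \<le> length xs - 1"
    unfolding depth_def using assms by (intro Least_le) blast
  then show ?thesis using \<open>length xs = Suc (length xs - 1)\<close> by linarith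
qed

lemma depth_ex:
  assumes t: "is_tree W E" and r: "r \<in> W" and v: "v \<in> W"
  shows "\<exists>xs. walk W E xs \<and> distinct xs \<and> hd xs = v \<and> last xs = r \<and> length xs = Suc (depth W E r v)"
proof -
  obtain xs where xs: "walk W E xs" "hd xs = v" "last xs = r"
    using tree_conn[OF t v r] by blast
  have "length xs = Suc (length xs - 1)" using xs walk_nonempty by fastforce
  then have ex: "\<exists>n xs. walk W E xs \<and> hd xs = v \<and> last xs = r \<and> length xs = Suc n"
    using xs by blast
  have "\<exists>xs. walk W E xs \<and> hd xs = v \<and> last xs = r \<and> length xs = Suc (depth W E r v)"
    unfolding depth_def by (rule LeastI_ex[OF ex])
  then obtain ys where ys: "walk W E ys" "hd ys = v" "last ys = r" "length ys = Suc (depth W E r v)"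
    by blast
  obtain zs where zs: "walk W E zs" "distinct zs" "hd zs = v" "last zs = r" "length zs \<le> length ys"
    using walk_to_path[OF ys(1)] ys by metis
  have "Suc (depth W E r v) \<le> length zs" using depth_le zs by metis
  then show ?thesis using zs ys by (intro exI[where x=zs]) auto
qed

lemma depth_root: "r \<in> W \<Longrightarrow> depth W E r r = 0"
  using depth_le[of W E "[r]" r r] by simp

lemma depth_zero:
  assumes "is_tree W E" "r \<in> W" "v \<in> W" "depth W E r v = 0"
  shows "v = r"
proof -
  obtain xs where "walk W E xs" "hd xs = v" "last xs = r" "length xs = 1"
    using depth_ex[OF assms(1-3)] assms(4) by auto
  then show ?thesis by (cases xs) auto
qed

lemma depth_adj:
  assumes t: "is_tree W E" and r: "r \<in> W" and yz: "y \<in> W" "z \<in> W" "E y z"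
  shows "depth W E r y \<le> Suc (depth W E r z)"
proof -
  obtain xs where xs: "walk W E xs" "hd xs = z" "last xs = r" "length xs = Suc (depth W E r z)"
    using depth_ex[OF t r yz(2)] by blast
  have "walk W E (y # xs)" using xs yz walk_nonempty[OF xs(1)] by (simp add: walk_Cons)
  moreover have "last (y # xs) = r" using xs walk_nonempty[OF xs(1)] by simp
  ultimately have "Suc (depth W E r y) \<le> length (y # xs)" using depth_le by fastforce
  then show ?thesis using xs by simp
qed

lemma depth_in_path:
  assumes "walk W E (as @ v # bs)" "last (as @ v # bs) = r"
  shows "depth W E r v \<le> length bs"
proof -
  have "walk W E (v # bs)" using walk_appendD2[OF assms(1)] by simp
  moreover have "last (v # bs) = r" using assms(2) by simp
  ultimately show ?thesis using depth_le[of W E "v # bs" v r] by simp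
qed

lemma depth_adj_neq:
  assumes t: "is_tree W E" and r: "r \<in> W" and yz: "y \<in> W" "z \<in> W" "E y z"
  shows "depth W E r y \<noteq> depth W E r z"
proof
  assume eq: "depth W E r y = depth W E r z"
  obtain xs where xs: "walk W E xs" "distinct xs" "hd xs = z" "last xs = r" "length xs = Suc (depth W E r z)"
    using depth_ex[OF t r yz(2)] by blast
  obtain ys where ys: "walk W E ys" "distinct ys" "hd ys = y" "last ys = r" "length ys = Suc (depth W E r y)"
    using depth_ex[OF t r yz(1)] by blast
  have yz': "y \<noteq> z" using tree_irrefl[OF t yz(1)] yz(3) by blast
  show False
  proof (cases "y \<in> set xs")
    case True
    then obtain as bs where asbs: "xs = as @ y # bs" by (metis split_list)
    have "as \<noteq> []" using asbs xs(3) yz' by auto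
    then have "length bs < depth W E r z" using asbs xs(5) by (cases as) auto
    moreover have "depth W E r y \<le> length bs" using depth_in_path[of W E as y bs r] xs asbs by simp
    ultimately show False using eq by simp
  next
    case False
    have "walk W E (y # xs)" using xs yz walk_nonempty[OF xs(1)] by (simp add: walk_Cons)
    moreover have "distinct (y # xs)" using False xs by simp
    moreover have "last (y # xs) = r" using xs walk_nonempty[OF xs(1)] by simp
    ultimately have "y # xs = ys" using tree_unique_path[OF t _ _ ys(1,2)] ys by simp
    then show False using xs ys eq by (metis length_Cons n_not_Suc_n)
  qed
qed

lemma depth_adj_cases:
  assumes t: "is_tree W E" and r: "r \<in> W" and yz: "y \<in> W" "z \<in> W" "E y z"
  shows "depth W E r y = Suc (depth W E r z) \<or> depth W E r z = Suc (depth W E r y)"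
proof -
  have "E z y" using symmD[OF tree_symm[OF t]] yz by blast
  then show ?thesis using depth_adj[OF t r yz] depth_adj[OF t r yz(2,1)] depth_adj_neq[OF t r yz] by linarith
qed

lemma depth_parent_unique:
  assumes t: "is_tree W E" and r: "r \<in> W" and v: "v \<in> W" and p: "p \<in> W" "E v p" and p': "p' \<in> W" "E v p'"
    and lt: "depth W E r p < depth W E r v" "depth W E r p' < depth W E r v"
  shows "p = p'"
proof -
  have dp: "depth W E r v = Suc (depth W E r p)" using depth_adj_cases[OF t r v p] lt by linarith
  have dp': "depth W E r v = Suc (depth W E r p')" using depth_adj_cases[OF t r v p'] lt by linarith
  have key: "\<exists>xs. walk W E (v # xs) \<and> distinct (v # xs) \<and> hd xs = q \<and> last (v # xs) = r"
    if q: "q \<in> W" "E v q" "depth W E r v = Suc (depth W E r q)" for q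
  proof -
    obtain xs where xs: "walk W E xs" "distinct xs" "hd xs = q" "last xs = r" "length xs = Suc (depth W E r q)"
      using depth_ex[OF t r q(1)] by blast
    have vq: "v \<noteq> q" using tree_irrefl[OF t v] q by blast
    have "v \<notin> set xs"
    proof
      assume "v \<in> set xs"
      then obtain as bs where asbs: "xs = as @ v # bs" by (metis split_list)
      have "as \<noteq> []" using asbs xs(3) vq by auto
      then have "length bs < depth W E r q" using asbs xs(5) by (cases as) auto
      moreover have "depth W E r v \<le> length bs" using depth_in_path[of W E as v bs r] xs asbs by simp
      ultimately show False using q(3) by simp
    qed
    then show ?thesis using xs v q walk_nonempty[OF xs(1)] by (intro exI[where x=xs]) (auto simp: walk_Cons)
  qed
  obtain xs where xs: "walk W E (v # xs)" "distinct (v # xs)" "hd xs = p" "last (v # xs) = r"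
    using key[OF p dp] by blast
  obtain ys where ys: "walk W E (v # ys)" "distinct (v # ys)" "hd ys = p'" "last (v # ys) = r"
    using key[OF p' dp'] by blast
  have "v # xs = v # ys" using tree_unique_path[OF t xs(1,2) ys(1,2)] xs ys by simp
  then show ?thesis using xs ys by simp
qed




section \<open>Domination basics\<close>

lemma dominating_mono:
  "dominating W E S' \<Longrightarrow> S' \<subseteq> S \<Longrightarrow> S \<subseteq> W \<Longrightarrow> dominating W E S"
  unfolding dominating_def by blast

lemma min_dom_iff:
  "min_dominating W E S \<longleftrightarrow> dominating W E S \<and> (\<forall>u\<in>S. \<not> dominating W E (S - {u}))"
proof
  assume m: "min_dominating W E S"
  have "\<not> dominating W E (S - {u})" if "u \<in> S" for u
  proof -
    have "S - {u} \<subset> S" using that by blast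
    then show ?thesis using m unfolding min_dominating_def by simp
  qed
  then show "dominating W E S \<and> (\<forall>u\<in>S. \<not> dominating W E (S - {u}))"
    using m unfolding min_dominating_def by simp
next
  assume a: "dominating W E S \<and> (\<forall>u\<in>S. \<not> dominating W E (S - {u}))"
  have "\<not> dominating W E S'" if "S' \<subset> S" for S'
  proof
    assume d: "dominating W E S'"
    obtain u where u: "u \<in> S" "u \<notin> S'" using \<open>S' \<subset> S\<close> by blast
    have SW: "S \<subseteq> W" using a by (simp add: dominating_def)
    have "S' \<subseteq> S - {u}" using u \<open>S' \<subset> S\<close> by blast
    moreover have "S - {u} \<subseteq> W" using SW by blast
    ultimately have "dominating W E (S - {u})"
      using dominating_mono[OF d] by simp
    then show False using a u by simp
  qed
  then show "min_dominating W E S" using a by (simp add: min_dominating_def)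
qed

lemma min_dom_crit: "min_dominating W E S \<Longrightarrow> crit W E S = S"
  unfolding min_dom_iff crit_def by blast

lemma not_dom_witness:
  assumes "S \<subseteq> W" "\<not> dominating W E S"
  shows "\<exists>z\<in>W. z \<notin> S \<and> (\<forall>s\<in>S. \<not> E z s)"
  using assms unfolding dominating_def by blast

lemma not_domI:
  assumes "z \<in> W" "z \<notin> S" "\<forall>s\<in>S. \<not> E z s"
  shows "\<not> dominating W E S"
  using assms unfolding dominating_def by blast

lemma N1_unique:
  assumes "n \<in> N1 W E S" "a \<in> S" "a' \<in> S" "a \<in> W" "a' \<in> W" "E n a" "E n a'"
  shows "a = a'"
proof -
  have "a \<in> cnbr W E n \<inter> S" "a' \<in> cnbr W E n \<inter> S"
    using assms by (auto simp: cnbr_def nbr_def)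
  moreover have "card (cnbr W E n \<inter> S) = 1" using assms(1) by (simp add: N1_def)
  ultimately show ?thesis by (metis card_1_singletonE singletonD)
qed

lemma N1I:
  assumes "z \<in> W" "z \<notin> S" "a \<in> S" "a \<in> W" "E z a" "\<forall>s\<in>S. E z s \<longrightarrow> s = a"
  shows "z \<in> N1 W E S"
proof -
  have "cnbr W E z \<inter> S \<subseteq> {a}"
  proof
    fix x assume x: "x \<in> cnbr W E z \<inter> S"
    then have "x \<noteq> z" using assms(2) by blast
    then have "E z x" using x by (simp add: cnbr_def nbr_def)
    then have "x = a" using assms(6) x by blast
    then show "x \<in> {a}" by simp
  qed
  moreover have "a \<in> cnbr W E z \<inter> S" using assms(3,4,5) by (simp add: cnbr_def nbr_def)
  ultimately have "cnbr W E z \<inter> S = {a}" by blast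
  then show ?thesis using assms(1,2) by (simp add: N1_def)
qed

definition good :: "'a set \<Rightarrow> ('a \<Rightarrow> 'a \<Rightarrow> bool) \<Rightarrow> 'a \<Rightarrow> 'a set \<Rightarrow> bool" where
  "good W E r S \<longleftrightarrow> dominating W E S \<and> r \<in> S \<and>
     (\<forall>v \<in> S - crit W E S. v \<noteq> r \<and> (\<forall>p\<in>W. E v p \<and> depth W E r p < depth W E r v \<longrightarrow> p \<notin> S))"

definition sdepth :: "'a set \<Rightarrow> ('a \<Rightarrow> 'a \<Rightarrow> bool) \<Rightarrow> 'a \<Rightarrow> 'a set \<Rightarrow> nat" where
  "sdepth W E r S = (\<Sum>v\<in>S. depth W E r v)"

context
  fixes W :: "'a set" and E :: "'a \<Rightarrow> 'a \<Rightarrow> bool" and r :: 'a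
  assumes t: "is_tree W E" and r: "r \<in> W"
begin

abbreviation "D \<equiv> depth W E r"

lemma sy: "u \<in> W \<Longrightarrow> v \<in> W \<Longrightarrow> E u v \<Longrightarrow> E v u"
  using symmD[OF tree_symm[OF t]] by blast

lemma irr: "u \<in> W \<Longrightarrow> \<not> E u u"
  using tree_irrefl[OF t] by blast

lemma finW: "finite W" using t by (simp add: is_tree_def)

lemma adjc: "y \<in> W \<Longrightarrow> z \<in> W \<Longrightarrow> E y z \<Longrightarrow> D y = Suc (D z) \<or> D z = Suc (D y)"
  using depth_adj_cases[OF t r] by blast

lemma puniq: "v \<in> W \<Longrightarrow> p \<in> W \<Longrightarrow> E v p \<Longrightarrow> p' \<in> W \<Longrightarrow> E v p' \<Longrightarrow> D p < D v \<Longrightarrow> D p' < D v \<Longrightarrow> p = p'"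
  using depth_parent_unique[OF t r] by blast

lemma step_good:
  assumes g: "good W E r S" and st: "alg1_step W E r S S1"
  shows "good W E r S1 \<and> card S \<le> card S1 \<and> sdepth W E r S < sdepth W E r S1"
proof -
  have dom: "dominating W E S" and rS: "r \<in> S"
    and inv: "\<And>v p. v \<in> S \<Longrightarrow> v \<notin> crit W E S \<Longrightarrow> v \<noteq> r"
    and inv2: "\<And>v p. v \<in> S \<Longrightarrow> v \<notin> crit W E S \<Longrightarrow> p \<in> W \<Longrightarrow> E v p \<Longrightarrow> D p < D v \<Longrightarrow> p \<notin> S"
    using g unfolding good_def by blast+
  have SW: "S \<subseteq> W" using dom by (simp add: dominating_def)
  have finS: "finite S" using SW finW finite_subset by blast
  obtain u where u: "u \<in> S" "u \<notin> crit W E S"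
    and S1: "S1 = (S - {v \<in> a1 W E S. E u v}) \<union> {w \<in> N1 W E S. \<exists>v\<in>{v \<in> a1 W E S. E u v}. E w v}"
    using st unfolding alg1_step_def Let_def by blast
  define A where "A = {v \<in> a1 W E S. E u v}"
  define N where "N = {w \<in> N1 W E S. \<exists>v\<in>A. E w v}"
  have S1': "S1 = (S - A) \<union> N" using S1 A_def N_def by simp
  define d where "d = D u"
  have uW: "u \<in> W" using u SW by blast
  have udom: "dominating W E (S - {u})" using u by (simp add: crit_def)
  have f2: "D w = Suc d" if "w \<in> S" "E u w" for w
  proof -
    have "w \<in> W" using that SW by blast
    show ?thesis using adjc[OF uW \<open>w \<in> W\<close> that(2)] inv2[OF u _ that(2)] that \<open>w \<in> W\<close> d_def
      by fastforce
  qed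
  have f3: "w \<in> crit W E S" if "w \<in> S" "E u w" for w
  proof (rule ccontr)
    assume "w \<notin> crit W E S"
    have "w \<in> W" using that SW by blast
    have "E w u" using sy[OF uW \<open>w \<in> W\<close> that(2)] .
    moreover have "D u < D w" using f2[OF that] d_def by simp
    ultimately show False using inv2[OF that(1) \<open>w \<notin> crit W E S\<close> uW] u by blast
  qed
  have f4: "w \<in> A" if "w \<in> S" "E u w" for w
  proof -
    have wW: "w \<in> W" using that SW by blast
    have wc: "w \<in> crit W E S" using f3[OF that] .
    then have "\<not> dominating W E (S - {w})" by (simp add: crit_def)
    then obtain z where z: "z \<in> W" "z \<notin> S - {w}" "\<forall>s\<in>S - {w}. \<not> E z s"
      using not_dom_witness[of "S - {w}" W E] SW by blast
    have uw: "u \<noteq> w" using irr[OF uW] that by blast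
    have "E w u" using sy[OF uW wW that(2)] .
    then have zw: "z \<noteq> w" using z u uw by blast
    then have zS: "z \<notin> S" using z by blast
    obtain s where s: "s \<in> S" "E z s" using dom z zS unfolding dominating_def by blast
    then have sw: "s = w" using z by blast
    have "z \<in> N1 W E S"
      by (rule N1I[OF z(1) zS that(1) wW]) (use s sw z in auto)
    moreover have "z \<in> cnbr W E w"
      using sy[OF z(1) wW] s sw z by (auto simp: cnbr_def nbr_def)
    ultimately have "w \<in> a1 W E S" using wc by (auto simp: a1_def)
    then show ?thesis using that A_def by simp
  qed
  have AS: "A \<subseteq> S" and Acrit: "A \<subseteq> crit W E S"
    unfolding A_def a1_def crit_def by auto
  have uA: "u \<notin> A" using u Acrit by blast
  have Ane: "A \<noteq> {}"
  proof -
    obtain s where "s \<in> S - {u}" "E u s"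
      using udom uW unfolding dominating_def by blast
    then show ?thesis using f4 by blast
  qed
  have f6: "D a = Suc d" if "a \<in> A" for a using f2 that AS A_def by blast
  have NS: "N \<inter> S = {}" and NW: "N \<subseteq> W" unfolding N_def N1_def by auto
  have Nnbr: "\<exists>a\<in>A. E n a" if "n \<in> N" for n using that N_def by blast
  have NN1: "N \<subseteq> N1 W E S" unfolding N_def by blast
  have Nuniq: "s \<in> A" if ns: "n \<in> N" "s \<in> S" "E n s" for n s
  proof -
    obtain a where a: "a \<in> A" "E n a" using Nnbr[OF ns(1)] by blast
    have "s = a" using N1_unique[of n W E S s a] ns a NN1 AS SW by blast
    then show ?thesis using a by simp
  qed
  have f7: "D n = Suc (Suc d)" if nN: "n \<in> N" for n
  proof -
    obtain a where a: "a \<in> A" "E n a" using Nnbr[OF nN] by blast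
    have nW: "n \<in> W" and aW: "a \<in> W" using nN NW a AS SW by auto
    have "D n \<noteq> d"
    proof
      assume "D n = d"
      have "E a n" using sy[OF nW aW a(2)] .
      moreover have "E a u" using sy[OF uW aW] a A_def by blast
      ultimately have "n = u" using puniq[OF aW nW _ uW] f6[OF a(1)] \<open>D n = d\<close> d_def by auto
      then show False using u NS nN by blast
    qed
    then show ?thesis using adjc[OF nW aW a(2)] f6[OF a(1)] by auto
  qed
  have finN: "finite N" using NW finW finite_subset by blast
  have finA: "finite A" using AS finS finite_subset by blast
  have cardAN: "card A \<le> card N"
  proof -
    have ex: "\<exists>z. z \<in> N \<and> E z a" if aA: "a \<in> A" for a
    proof -
      have "a \<in> a1 W E S" using aA A_def by blast
      then obtain z where z: "z \<in> cnbr W E a" "z \<in> N1 W E S" unfolding a1_def by blast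
      have "z \<noteq> a" using z AS aA unfolding N1_def by blast
      then have "E a z" "z \<in> W" using z unfolding cnbr_def nbr_def by auto
      then have "E z a" using sy AS SW aA by blast
      then show ?thesis using z aA N_def by blast
    qed
    define g where "g a = (SOME z. z \<in> N \<and> E z a)" for a
    have g: "g a \<in> N \<and> E (g a) a" if "a \<in> A" for a
      using someI_ex[OF ex[OF that]] g_def by simp
    have "inj_on g A"
    proof (rule inj_onI)
      fix a a' assume aa: "a \<in> A" "a' \<in> A" "g a = g a'"
      show "a = a'" using N1_unique[of "g a" W E S a a'] g[OF aa(1)] g[OF aa(2)] aa NN1 AS SW
        by auto
    qed
    moreover have "g ` A \<subseteq> N" using g by blast
    ultimately show ?thesis using card_inj_on_le finN by blast
  qed
  have cardS1: "card S1 = card (S - A) + card N"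
    unfolding S1' by (rule card_Un_disjoint) (use NS finS finN in auto)
  have cardS: "card S = card (S - A) + card A"
    using AS finS finA by (metis card_Diff_subset le_add_diff_inverse2 card_mono)
  have sdS1: "sdepth W E r S1 = sdepth W E r (S - A) + sdepth W E r N"
    unfolding sdepth_def S1' by (rule sum.union_disjoint) (use NS finS finN in auto)
  have sdS: "sdepth W E r S = sdepth W E r (S - A) + sdepth W E r A"
    using AS finS unfolding sdepth_def by (metis sum.subset_diff)
  have sdA: "sdepth W E r A = card A * Suc d"
    unfolding sdepth_def using f6 by simp
  have sdN: "sdepth W E r N = card N * Suc (Suc d)"
    unfolding sdepth_def using f7 by simp
  have cA: "card A \<ge> 1" using Ane finA by (simp add: Suc_le_eq card_gt_0_iff)
  have "card A * Suc d < card N * Suc (Suc d)"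
  proof -
    have "card A * Suc d \<le> card N * Suc d" using cardAN by (rule mult_right_mono) simp
    moreover have "card N * Suc d < card N * Suc (Suc d)" using cA cardAN by simp
    ultimately show ?thesis by linarith
  qed
  then have sdlt: "sdepth W E r S < sdepth W E r S1" using sdS sdS1 sdA sdN by linarith
  have cardle: "card S \<le> card S1" using cardS cardS1 cardAN by linarith
  have S1W: "S1 \<subseteq> W" using S1' SW NW by blast
  have dom1: "dominating W E S1"
    unfolding dominating_def
  proof (intro conjI ballI S1W)
    fix y assume yW: "y \<in> W"
    show "y \<in> S1 \<or> (\<exists>s\<in>S1. E y s)"
    proof (cases "y \<in> S")
      case True
      show ?thesis
      proof (cases "y \<in> A")
        case False then show ?thesis using True S1' by blast
      next
        case yA: True
        have "E y u" using sy[OF uW yW] yA A_def by blast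
        then show ?thesis using u uA S1' by blast
      qed
    next
      case yS: False
      obtain s where s: "s \<in> S" "E y s" using dom yW yS unfolding dominating_def by blast
      show ?thesis
      proof (cases "\<exists>s'\<in>S. E y s' \<and> s' \<notin> A")
        case True then show ?thesis using S1' by blast
      next
        case False
        then have sA: "s \<in> A" using s by blast
        show ?thesis
        proof (cases "\<forall>s'\<in>S. E y s' \<longrightarrow> s' = s")
          case True
          have "y \<in> N1 W E S" by (rule N1I[OF yW yS s(1)]) (use s SW True in blast)+
          then have "y \<in> N" using N_def sA s by blast
          then show ?thesis using S1' by blast
        next
          case False
          then obtain s' where s': "s' \<in> S" "E y s'" "s' \<noteq> s" by blast
          have s'A: "s' \<in> A" using s' \<open>\<not> (\<exists>s'\<in>S. E y s' \<and> s' \<notin> A)\<close> by blast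
          have sW: "s \<in> W" "s' \<in> W" using s s' SW by auto
          have ds: "D s = Suc d" "D s' = Suc d" using f6 sA s'A by auto
          show ?thesis
          proof (cases "D y = d")
            case True
            have "E s y" using sy[OF yW sW(1) s(2)] .
            moreover have "E s u" using sy[OF uW sW(1)] sA A_def by blast
            ultimately have "y = u" using puniq[OF sW(1) yW _ uW] ds True d_def by auto
            then show ?thesis using yS u by blast
          next
            case False
            then have "D y = Suc (Suc d)" using adjc[OF yW sW(1) s(2)] ds by auto
            then have "s = s'" using puniq[OF yW sW(1) s(2) sW(2) s'(2)] ds by simp
            then show ?thesis using s' by blast
          qed
        qed
      qed
    qed
  qed
  have rS1: "r \<in> S1"
  proof -
    have "D r = 0" using depth_root[OF r] .
    then have "r \<notin> A" using f6 by force
    then show ?thesis using rS S1' by blast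
  qed
  have inv1: "v \<noteq> r \<and> (\<forall>p\<in>W. E v p \<and> D p < D v \<longrightarrow> p \<notin> S1)"
    if v: "v \<in> S1" "v \<notin> crit W E S1" for v
  proof -
    have vdom: "dominating W E (S1 - {v})" using v by (simp add: crit_def)
    have vW: "v \<in> W" using v S1W by blast
    obtain s where s: "s \<in> S1 - {v}" "E v s" using vdom vW v(1) unfolding dominating_def by blast
    have sW: "s \<in> W" using s S1W by blast
    have vN: "v \<notin> N"
    proof
      assume vN: "v \<in> N"
      show False
      proof (cases "s \<in> N")
        case True
        then show False using adjc[OF vW sW s(2)] f7 vN by force
      next
        case False
        then have "s \<in> S" "s \<notin> A" using s S1' by auto
        then show False using Nuniq[OF vN _ s(2)] by blast
      qed
    qed
    have vu: "v \<noteq> u"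
    proof
      assume vu: "v = u"
      show False
      proof (cases "s \<in> N")
        case True
        then show False using adjc[OF vW sW s(2)] f7 vu d_def by force
      next
        case False
        then have "s \<in> S" "s \<notin> A" using s S1' by auto
        then show False using f4 s vu by blast
      qed
    qed
    have vSA: "v \<in> S" "v \<notin> A" using v(1) vN S1' by auto
    show ?thesis
    proof (cases "v \<in> crit W E S")
      case False
      have "v \<noteq> r" using inv[OF vSA(1) False] .
      moreover have "p \<notin> S1" if p: "p \<in> W" "E v p" "D p < D v" for p
      proof -
        have "p \<notin> S" using inv2[OF vSA(1) False p] .
        moreover have "p \<notin> N"
        proof
          assume pN: "p \<in> N"
          have "E p v" using sy[OF vW p(1) p(2)] .
          then show False using Nuniq[OF pN vSA(1)] vSA by blast
        qed
        ultimately show ?thesis using S1' by blast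
      qed
      ultimately show ?thesis by blast
    next
      case True
      then have "\<not> dominating W E (S - {v})" by (simp add: crit_def)
      then obtain z where z: "z \<in> W" "z \<notin> S - {v}" "\<forall>s\<in>S - {v}. \<not> E z s"
        using not_dom_witness[of "S - {v}" W E] SW by blast
      have zz: "z \<in> S1 - {v} \<or> (\<exists>s\<in>S1 - {v}. E z s)" using vdom z(1) unfolding dominating_def by blast
      have "\<not> (z \<in> S1 - {v})"
      proof
        assume "z \<in> S1 - {v}"
        then have "z \<in> N" using z S1' by blast
        then obtain a where "a \<in> A" "E z a" using Nnbr by blast
        then show False using z vSA AS by blast
      qed
      then obtain n where n: "n \<in> S1 - {v}" "E z n" using zz by blast
      have nN: "n \<in> N" using n z S1' by blast
      obtain a where a: "a \<in> A" "E n a" using Nnbr[OF nN] by blast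
      have nW: "n \<in> W" using nN NW by blast
      have aW: "a \<in> W" using a AS SW by blast
      have zv: "z \<noteq> v"
      proof
        assume "z = v"
        then have "E n v" using sy[OF vW nW] n by blast
        then show False using Nuniq[OF nN vSA(1)] vSA by blast
      qed
      then have zS: "z \<notin> S" using z by blast
      have ezv: "E z v"
      proof -
        obtain s where "s \<in> S" "E z s" using dom z(1) zS unfolding dominating_def by blast
        then show ?thesis using z by blast
      qed
      have dn: "D n = Suc (Suc d)" using f7[OF nN] .
      have ez: "E n z" using sy[OF z(1) nW n(2)] .
      have dz: "D z = Suc (Suc (Suc d))"
      proof -
        have "D z \<noteq> Suc d"
        proof
          assume "D z = Suc d"
          then have "z = a" using puniq[OF nW z(1) ez aW a(2)] dn f6[OF a(1)] by simp
          then show False using zS a AS by blast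
        qed
        then show ?thesis using adjc[OF nW z(1) ez] dn by auto
      qed
      have evz: "E v z" using sy[OF z(1) vW ezv] .
      have dv: "D v = Suc (Suc (Suc (Suc d)))"
      proof -
        have "D v \<noteq> Suc (Suc d)"
        proof
          assume "D v = Suc (Suc d)"
          then have "v = n" using puniq[OF z(1) vW ezv nW n(2)] dz dn by simp
          then show False using n by blast
        qed
        then show ?thesis using adjc[OF vW z(1) evz] dz by auto
      qed
      have "v \<noteq> r" using dv depth_root[OF r] by auto
      moreover have "p \<notin> S1" if p: "p \<in> W" "E v p" "D p < D v" for p
      proof -
        have "p = z" using puniq[OF vW p(1) p(2) z(1) evz p(3)] dz dv by simp
        moreover have "z \<notin> N" using f7 dz by force
        ultimately show ?thesis using zS S1' by blast
      qed
      ultimately show ?thesis by blast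
    qed
  qed
  have "good W E r S1" unfolding good_def using dom1 rS1 inv1 by blast
  then show ?thesis using cardle sdlt by blast
qed

end




context
  fixes W :: "'a set" and E :: "'a \<Rightarrow> 'a \<Rightarrow> bool" and r :: 'a
  assumes t: "is_tree W E" and r: "r \<in> W"
begin

lemma good_sub: "good W E r S \<Longrightarrow> S \<subseteq> W"
  by (simp add: good_def dominating_def)

lemma sdepth_le: "S \<subseteq> W \<Longrightarrow> sdepth W E r S \<le> sdepth W E r W"
  unfolding sdepth_def using finW[OF t r] by (rule sum_mono2) auto

lemma progress:
  assumes g: "good W E r S" and nm: "\<not> min_dominating W E S"
  shows "\<exists>S1. alg1_step W E r S S1"
proof -
  have dom: "dominating W E S" using g by (simp add: good_def)
  define C where "C = S - crit W E S"
  have "\<exists>u\<in>S. dominating W E (S - {u})" using nm dom min_dom_iff by blast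
  then have Cne: "C \<noteq> {}" unfolding C_def crit_def by blast
  have finC: "finite C" using good_sub[OF g] finW[OF t r] C_def finite_subset by blast
  define m where "m = Min (depth W E r ` C)"
  have "m \<in> depth W E r ` C" using Cne finC m_def by simp
  then obtain u where u: "u \<in> C" "depth W E r u = m" by blast
  have umin: "\<forall>w\<in>C. depth W E r u \<le> depth W E r w" using u finC m_def by simp
  define S1 where "S1 = (S - {v \<in> a1 W E S. E u v}) \<union> {w \<in> N1 W E S. \<exists>v\<in>{v \<in> a1 W E S. E u v}. E w v}"
  have "alg1_step W E r S S1"
    unfolding alg1_step_def Let_def
    using nm u umin C_def S1_def by blast
  then show ?thesis by blast
qed

lemma alg1_term:
  assumes g: "good W E r S"
  shows "alg1_terminates W E r S"
  unfolding alg1_terminates_def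
proof
  assume "\<exists>f. f 0 = S \<and> (\<forall>i. alg1_step W E r (f i) (f (Suc i)))"
  then obtain f where f0: "f 0 = S" and fs: "\<And>i. alg1_step W E r (f i) (f (Suc i))" by blast
  have h: "good W E r (f i) \<and> i \<le> sdepth W E r (f i)" for i
  proof (induction i)
    case 0 then show ?case using f0 g by simp
  next
    case (Suc i)
    then show ?case using step_good[OF t r _ fs[of i]] by fastforce
  qed
  define k where "k = Suc (sdepth W E r W)"
  have "k \<le> sdepth W E r (f k)" using h by blast
  moreover have "sdepth W E r (f k) \<le> sdepth W E r W" using h good_sub sdepth_le by blast
  ultimately show False using k_def by simp
qed

lemma alg1_exists:
  assumes g: "good W E r S"
  shows "\<exists>R. alg1_result W E r S R"
  using g
proof (induction "sdepth W E r W - sdepth W E r S" arbitrary: S rule: less_induct)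
  case less
  show ?case
  proof (cases "min_dominating W E S")
    case True
    then show ?thesis using alg1_result.stop[of W E S r] by blast
  next
    case False
    obtain S1 where st: "alg1_step W E r S S1" using progress[OF less.prems False] by blast
    have s: "good W E r S1" "sdepth W E r S < sdepth W E r S1"
      using step_good[OF t r less.prems st] by auto
    have "sdepth W E r S1 \<le> sdepth W E r W" using sdepth_le good_sub s(1) by blast
    then have "sdepth W E r W - sdepth W E r S1 < sdepth W E r W - sdepth W E r S" using s(2) by linarith
    then obtain R where "alg1_result W E r S1 R" using less.hyps s(1) by blast
    then show ?thesis using alg1_result.step[OF st] by blast
  qed
qed

lemma alg1_props:
  assumes "alg1_result W E r S R" "good W E r S"
  shows "min_dominating W E R \<and> r \<in> R \<and> card S \<le> card R \<and> R \<subseteq> W"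
  using assms
proof (induction rule: alg1_result.induct)
  case (stop M)
  then show ?case by (simp add: good_def min_dominating_def dominating_def)
next
  case (step M M1 Mf)
  then show ?case using step_good[OF t r step.prems step.hyps(1)] le_trans by blast
qed

end




lemma walk_join:
  assumes "walk W E xs" "walk W E ys" "last xs = hd ys"
  shows "walk W E (xs @ tl ys) \<and> hd (xs @ tl ys) = hd xs \<and> last (xs @ tl ys) = last ys"
proof (cases ys)
  case Nil then show ?thesis using assms walk_nonempty by blast
next
  case (Cons h rest)
  show ?thesis
  proof (cases rest)
    case Nil
    then show ?thesis using assms Cons walk_nonempty[OF assms(1)] by simp
  next
    case (Cons h' rest')
    have "E h h'" using assms(2) \<open>ys = h # rest\<close> Cons by (simp add: walk_Cons2)
    moreover have "walk W E rest" using assms(2) \<open>ys = h # rest\<close> Cons by (simp add: walk_Cons2)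
    ultimately have "walk W E (xs @ rest)"
      using walk_append[OF assms(1)] assms(3) \<open>ys = h # rest\<close> Cons by simp
    then show ?thesis using \<open>ys = h # rest\<close> Cons walk_nonempty[OF assms(1)] by simp
  qed
qed

lemma walk_suffix:
  assumes "walk W E (as @ w # bs)"
  shows "walk W E (w # bs)"
  using walk_appendD2[OF assms] by simp

lemma is_cycle_mono: "is_cycle W E cs \<Longrightarrow> W \<subseteq> V \<Longrightarrow> is_cycle V E cs"
  unfolding is_cycle_def walk_def by auto

locale alg2_ctx =
  fixes V :: "'a set" and E :: "'a \<Rightarrow> 'a \<Rightarrow> bool" and M X :: "'a set"
  assumes tree: "is_tree V E"
    and minM: "min_dominating V E M"
    and XN2: "X \<subseteq> N2 V E M"
    and conn: "connected_graph ((nbrs V E X \<inter> a2 V E M) \<union> X) E"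
    and indep: "\<forall>u\<in>X. \<forall>v\<in>X. \<not> E u v"

context alg2_ctx
begin

abbreviation "A2 \<equiv> nbrs V E X \<inter> a2 V E M"
abbreviation "Wx x \<equiv> sub_vertices V E A2 x"

lemma MV: "M \<subseteq> V" using minM by (simp add: min_dominating_def dominating_def)
lemma XV: "X \<subseteq> V" using XN2 by (auto simp: N2_def)
lemma XM: "X \<inter> M = {}" using XN2 by (auto simp: N2_def)
lemma A2M: "A2 \<subseteq> M" by (auto simp: a2_def crit_def)
lemma A2V: "A2 \<subseteq> V" using A2M MV by blast
lemma A2X: "A2 \<inter> X = {}" using A2M XM by blast
lemma critM: "crit V E M = M" using min_dom_crit[OF minM] .
lemma domM: "dominating V E M" using minM by (simp add: min_dominating_def)

lemma symV: "u \<in> V \<Longrightarrow> v \<in> V \<Longrightarrow> E u v \<Longrightarrow> E v u"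
  using symmD[OF tree_symm[OF tree]] by blast

lemma irrV: "u \<in> V \<Longrightarrow> \<not> E u u"
  using tree_irrefl[OF tree] by blast

lemma a2_no_M_nbr:
  assumes a: "a \<in> a2 V E M" and m: "m \<in> M" and e: "E a m"
  shows False
proof -
  have aM: "a \<in> M" using a by (simp add: a2_def crit_def)
  have aV: "a \<in> V" using aM MV by blast
  have "\<not> dominating V E (M - {a})" using a by (simp add: a2_def crit_def)
  then obtain z where z: "z \<in> V" "z \<notin> M - {a}" "\<forall>s\<in>M - {a}. \<not> E z s"
    using not_dom_witness[of "M - {a}" V E] MV by blast
  show False
  proof (cases "z = a")
    case True
    then show False using z m e irrV[OF aV] by blast
  next
    case False
    then have zM: "z \<notin> M" using z by blast
    obtain s where s: "s \<in> M" "E z s" using domM z(1) zM unfolding dominating_def by blast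
    then have sa: "s = a" using z by blast
    have "z \<in> N1 V E M"
      by (rule N1I[OF z(1) zM aM aV]) (use s sa z in blast)+
    moreover have "z \<in> cnbr V E a" using symV[OF z(1) aV] s sa z by (simp add: cnbr_def nbr_def)
    ultimately show False using a by (auto simp: a2_def)
  qed
qed

lemma a2_nbr_not_N1:
  assumes a: "a \<in> a2 V E M" and y: "y \<in> V" "E a y"
  shows "y \<notin> N1 V E M"
  using assms by (auto simp: a2_def cnbr_def nbr_def)

lemma Wx_V: "Wx x \<subseteq> V" by (auto simp: sub_vertices_def)

lemma Wx_path:
  assumes y: "y \<in> Wx x" and x: "x \<in> V"
  shows "\<exists>P. walk V E P \<and> distinct P \<and> hd P = y \<and> last P = x \<and> set P \<inter> A2 = {}"
proof -
  have yV: "y \<in> V" using y Wx_V by blast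
  obtain P where P: "walk V E P" "distinct P" "hd P = y" "last P = x"
    using tree_path[OF tree yV x] by blast
  have "set P \<inter> A2 = {}"
    using y P unfolding sub_vertices_def descendant_def by blast
  then show ?thesis using P by blast
qed

lemma in_WxI:
  assumes x: "x \<in> V" and P: "walk V E P" "hd P = y" "last P = x" "set P \<inter> A2 = {}"
  shows "y \<in> Wx x"
proof -
  have yV: "y \<in> V" using P walk_subset walk_nonempty by fastforce
  obtain P' where P': "walk V E P'" "distinct P'" "hd P' = y" "last P' = x" "set P' \<subseteq> set P"
    using walk_to_path[OF P(1)] P by metis
  have "\<not> descendant V E x y z" if z: "z \<in> A2" for z
  proof
    assume "descendant V E x y z"
    then obtain Q where Q: "walk V E Q" "distinct Q" "hd Q = y" "last Q = x" "z \<in> set Q"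
      unfolding descendant_def by blast
    have "Q = P'" using tree_unique_path[OF tree Q(1,2) P'(1,2)] Q P' by simp
    then show False using Q(5) P'(5) P(4) z by blast
  qed
  then show ?thesis using yV unfolding sub_vertices_def by blast
qed

lemma Wx_closure:
  assumes y: "y \<in> Wx x" and x: "x \<in> V" and z: "z \<in> V" "E z y" "z \<notin> A2"
  shows "z \<in> Wx x"
proof -
  obtain P where P: "walk V E P" "distinct P" "hd P = y" "last P = x" "set P \<inter> A2 = {}"
    using Wx_path[OF y x] by blast
  have "walk V E (z # P)" using P z walk_nonempty[OF P(1)] by (simp add: walk_Cons)
  moreover have "last (z # P) = x" using P walk_nonempty[OF P(1)] by simp
  moreover have "set (z # P) \<inter> A2 = {}" using P z by simp
  ultimately show ?thesis using in_WxI[OF x] by simp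
qed

lemma Wx_A2: "x \<in> V \<Longrightarrow> A2 \<inter> Wx x = {}"
proof (rule ccontr)
  assume x: "x \<in> V" and "A2 \<inter> Wx x \<noteq> {}"
  then obtain a where a: "a \<in> A2" "a \<in> Wx x" by blast
  obtain P where P: "walk V E P" "hd P = a" "set P \<inter> A2 = {}"
    using Wx_path[OF a(2) x] by blast
  have "a \<in> set P" using P walk_nonempty[OF P(1)] by (cases P) auto
  then show False using P a by blast
qed

lemma x_in_Wx: "x \<in> X \<Longrightarrow> x \<in> Wx x"
  using in_WxI[of x "[x]" x] XV A2X by auto

lemma Wx_tree:
  assumes x: "x \<in> X"
  shows "is_tree (Wx x) E"
proof -
  have xV: "x \<in> V" using x XV by blast
  have pathW: "\<exists>P. walk (Wx x) E P \<and> hd P = y \<and> last P = x" if y: "y \<in> Wx x" for y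
  proof -
    obtain P where P: "walk V E P" "distinct P" "hd P = y" "last P = x" "set P \<inter> A2 = {}"
      using Wx_path[OF y xV] by blast
    have "w \<in> Wx x" if w: "w \<in> set P" for w
    proof -
      obtain as bs where P': "P = as @ w # bs" using split_list[OF w] by blast
      have "walk V E (w # bs)" using walk_suffix[of V E as w bs] P(1) P' by simp
      moreover have "last (w # bs) = x" using P(4) P' by simp
      moreover have "set (w # bs) \<inter> A2 = {}" using P(5) P' by auto
      ultimately show ?thesis using in_WxI[OF xV] by simp
    qed
    then have "walk (Wx x) E P" using walk_mono[OF P(1)] by blast
    then show ?thesis using P by blast
  qed
  have symW: "symm (Wx x) E" using tree_symm[OF tree] Wx_V unfolding symm_def by blast
  have cW: "connected_graph (Wx x) E"
    unfolding connected_graph_def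
  proof (intro ballI)
    fix u v assume u: "u \<in> Wx x" and v: "v \<in> Wx x"
    obtain P where P: "walk (Wx x) E P" "hd P = u" "last P = x" using pathW[OF u] by blast
    obtain Q where Q: "walk (Wx x) E Q" "hd Q = v" "last Q = x" using pathW[OF v] by blast
    have Qr: "walk (Wx x) E (rev Q)" using walk_rev[OF Q(1) symW] .
    have "hd (rev Q) = x" using Q walk_nonempty[OF Q(1)] by (simp add: hd_rev)
    moreover have "last (rev Q) = v" using Q walk_nonempty[OF Q(1)] by (simp add: last_rev)
    ultimately show "\<exists>xs. walk (Wx x) E xs \<and> hd xs = u \<and> last xs = v"
      using walk_join[OF P(1) Qr] P by metis
  qed
  have "finite V" using tree by (simp add: is_tree_def)
  then have "finite (Wx x)" using Wx_V finite_subset by blast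
  moreover have "Wx x \<noteq> {}" using x_in_Wx[OF x] by blast
  moreover have "\<forall>u\<in>Wx x. \<forall>v\<in>Wx x. E u v \<longleftrightarrow> E v u" using symW by (simp add: symm_def)
  moreover have "\<forall>u\<in>Wx x. \<not> E u u" using irrV Wx_V by blast
  moreover have "\<not> (\<exists>cs. is_cycle (Wx x) E cs)" using is_cycle_mono[OF _ Wx_V] tree_nocycle[OF tree] by blast
  ultimately show ?thesis using cW by (simp add: is_tree_def)
qed

lemma conn_path:
  assumes "u \<in> A2 \<union> X" "v \<in> A2 \<union> X"
  shows "\<exists>Q. walk V E Q \<and> distinct Q \<and> hd Q = u \<and> last Q = v \<and> set Q \<subseteq> A2 \<union> X"
proof -
  obtain Q where Q: "walk (A2 \<union> X) E Q" "hd Q = u" "last Q = v"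
    using conn assms unfolding connected_graph_def by blast
  obtain Q' where Q': "walk (A2 \<union> X) E Q'" "distinct Q'" "hd Q' = u" "last Q' = v"
    using walk_to_path[OF Q(1)] Q by metis
  have s: "set Q' \<subseteq> A2 \<union> X" using walk_subset[OF Q'(1)] .
  then have "walk V E Q'" using walk_mono[OF Q'(1)] A2V XV by blast
  then show ?thesis using Q' s by blast
qed

lemma other_x_notin:
  assumes x: "x \<in> X" and x': "x' \<in> X" "x' \<noteq> x"
  shows "x' \<notin> Wx x"
proof -
  obtain Q where Q: "walk V E Q" "distinct Q" "hd Q = x'" "last Q = x" "set Q \<subseteq> A2 \<union> X"
    using conn_path[of x' x] x x' by blast
  obtain q rest where Qe: "Q = x' # q # rest"
  proof (cases Q)
    case Nil then show ?thesis using Q walk_nonempty by blast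
  next
    case (Cons a l)
    then show ?thesis
    proof (cases l)
      case Nil then show ?thesis using Q Cons x' by simp
    next
      case (Cons b l') then show ?thesis using that \<open>Q = a # l\<close> Q by simp
    qed
  qed
  have "E x' q" using Q(1) Qe by (simp add: walk_Cons2)
  moreover have "q \<in> A2 \<union> X" using Q(5) Qe by simp
  ultimately have "q \<in> A2" using indep x' by blast
  then have "descendant V E x x' q" unfolding descendant_def using Q Qe by auto
  then show ?thesis using \<open>q \<in> A2\<close> unfolding sub_vertices_def by blast
qed

lemma X_Wx: "x \<in> X \<Longrightarrow> x' \<in> X \<Longrightarrow> x' \<in> Wx x \<Longrightarrow> x' = x"
  using other_x_notin by blast

lemma Wx_disj:
  assumes x: "x \<in> X" "x' \<in> X" "x \<noteq> x'"
  shows "Wx x \<inter> Wx x' = {}"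
proof (rule ccontr)
  assume "Wx x \<inter> Wx x' \<noteq> {}"
  then obtain y where y: "y \<in> Wx x" "y \<in> Wx x'" by blast
  have xV: "x \<in> V" "x' \<in> V" using x XV by auto
  obtain P where P: "walk V E P" "distinct P" "hd P = y" "last P = x" "set P \<inter> A2 = {}"
    using Wx_path[OF y(1) xV(1)] by blast
  obtain P' where P': "walk V E P'" "distinct P'" "hd P' = y" "last P' = x'" "set P' \<inter> A2 = {}"
    using Wx_path[OF y(2) xV(2)] by blast
  have r: "walk V E (rev P')" using walk_rev[OF P'(1) tree_symm[OF tree]] .
  have "last (rev P') = y" "hd (rev P') = x'" using P' walk_nonempty[OF P'(1)] by (auto simp: last_rev hd_rev)
  then have j: "walk V E (rev P' @ tl P) \<and> hd (rev P' @ tl P) = x' \<and> last (rev P' @ tl P) = x"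
    using walk_join[OF r P(1)] P by simp
  have "set (tl P) \<subseteq> set P" by (cases P) auto
  then have "set (rev P' @ tl P) \<inter> A2 = {}" using P(5) P'(5) by auto
  then have "x' \<in> Wx x" using in_WxI[OF xV(1)] j by blast
  then show False using other_x_notin[OF x(1) x(2)] x(3) by blast
qed

lemma boundary:
  assumes x: "x \<in> X" and y: "y \<in> Wx x" and a: "a \<in> A2" and e: "E y a"
  shows "y = x"
proof -
  have xV: "x \<in> V" using x XV by blast
  have aV: "a \<in> V" using a A2V by blast
  have yV: "y \<in> V" using y Wx_V by blast
  obtain Q where Q: "walk V E Q" "distinct Q" "hd Q = a" "last Q = x" "set Q \<subseteq> A2 \<union> X"
    using conn_path[of a x] x a by blast
  obtain P where P: "walk V E P" "distinct P" "hd P = y" "last P = x" "set P \<inter> A2 = {}"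
    using Wx_path[OF y xV] by blast
  have "walk V E (a # P)" using P symV[OF yV aV e] aV walk_nonempty[OF P(1)] by (simp add: walk_Cons)
  moreover have "distinct (a # P)" using P a by auto
  moreover have "last (a # P) = x" using P walk_nonempty[OF P(1)] by simp
  ultimately have "Q = a # P" using tree_unique_path[OF tree Q(1,2)] Q by simp
  then have "y \<in> A2 \<union> X" using Q(5) P(3) walk_nonempty[OF P(1)] by (cases P) auto
  moreover have "y \<notin> A2" using Wx_A2[OF xV] y by blast
  ultimately show ?thesis using X_Wx[OF x _ y] by blast
qed

lemma two_A2:
  assumes y: "y \<in> V" "y \<notin> A2 \<union> X" and a: "a \<in> A2" "a' \<in> A2" "a \<noteq> a'" and e: "E y a" "E y a'"
  shows False
proof -
  have aV: "a \<in> V" "a' \<in> V" using a A2V by auto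
  obtain Q where Q: "walk V E Q" "distinct Q" "hd Q = a" "last Q = a'" "set Q \<subseteq> A2 \<union> X"
    using conn_path[of a a'] a by blast
  have "walk V E [a, y, a']" using y aV e symV[OF y(1) aV(1) e(1)] by (simp add: walk_Cons2)
  moreover have "distinct [a, y, a']" using y a by auto
  ultimately have "Q = [a, y, a']" using tree_unique_path[OF tree Q(1,2)] Q by simp
  then show False using Q(5) y by simp
qed

end




context alg2_ctx
begin

abbreviation "AA \<equiv> nbrs V E X \<inter> crit V E M"
abbreviation "NN \<equiv> nbrs V E AA \<inter> N1 V E M"

lemma init_eq: "alg2_init V E M X = ((M \<union> X) - AA) \<union> NN"
  by (simp add: alg2_init_def Let_def)

lemma AA_eq: "AA = nbrs V E X \<inter> M" using critM by simp

lemma in_nbrs: "v \<in> nbrs V E S \<longleftrightarrow> v \<in> V \<and> (\<exists>s\<in>S. E s v)"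
  by (auto simp: nbrs_def nbr_def)

lemma A2_AA: "A2 \<subseteq> AA" by (auto simp: a2_def)

lemma AA_M: "AA \<subseteq> M" using AA_eq by blast

lemma NN_N1: "NN \<subseteq> N1 V E M" by blast

lemma NN_M: "NN \<inter> M = {}" by (auto simp: N1_def)

lemma NN_X: "NN \<inter> X = {}" using XN2 by (auto simp: N1_def N2_def)

lemma NN_V: "NN \<subseteq> V" by (auto simp: N1_def)

lemma NN_a:
  assumes "n \<in> NN"
  shows "\<exists>a\<in>AA - A2. E a n \<and> E n a"
proof -
  obtain a where a: "a \<in> AA" "E a n" using assms in_nbrs by blast
  have nV: "n \<in> V" using assms NN_V by blast
  have aV: "a \<in> V" using a AA_M MV by blast
  have "a \<notin> A2" using a2_nbr_not_N1[of a n] a assms nV by blast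
  then show ?thesis using a symV[OF aV nV] by blast
qed

lemma AA_x: "a \<in> AA \<Longrightarrow> \<exists>x'\<in>X. E x' a \<and> E a x'"
  using in_nbrs[of a X] symV XV by blast

lemma AA1_in_W: "a \<in> AA - A2 \<Longrightarrow> x' \<in> X \<Longrightarrow> E a x' \<Longrightarrow> a \<in> Wx x'"
  using Wx_closure[OF x_in_Wx, of x' a] XV AA_M MV by blast

lemma AA_in_W_adj:
  assumes x: "x \<in> X" and a: "a \<in> AA" "a \<in> Wx x"
  shows "E x a"
proof -
  have xV: "x \<in> V" using x XV by blast
  obtain x' where x': "x' \<in> X" "E x' a" "E a x'" using AA_x[OF a(1)] by blast
  have "x' \<notin> A2" using x' A2X by blast
  then have "x' \<in> Wx x" using Wx_closure[OF a(2) xV, of x'] x' XV by blast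
  then have "x' = x" using X_Wx[OF x x'(1)] by blast
  then show ?thesis using x' by simp
qed

lemma good_init:
  assumes x: "x \<in> X"
  shows "good (Wx x) E x (alg2_init V E M X \<inter> Wx x)"
proof -
  define W where "W = Wx x"
  define S0 where "S0 = alg2_init V E M X \<inter> W"
  have Wt: "is_tree W E" using Wx_tree[OF x] W_def by simp
  have xW: "x \<in> W" using x_in_Wx[OF x] W_def by simp
  have xV: "x \<in> V" using x XV by blast
  have WV: "W \<subseteq> V" using Wx_V W_def by simp
  have WA2: "A2 \<inter> W = {}" using Wx_A2[OF xV] W_def by simp
  let ?D = "depth W E x"
  have clos: "z \<in> W" if "y \<in> W" "z \<in> V" "E z y" "z \<notin> A2" for y z
    using Wx_closure[of y x z] that xV W_def by blast
  have xM: "x \<notin> M" using x XM by blast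
  have xS0: "x \<in> S0" using x xW xM AA_M unfolding S0_def init_eq by blast
  have XW: "y \<in> X \<Longrightarrow> y \<in> W \<Longrightarrow> y = x" for y using X_Wx[OF x] W_def by blast
  have adjx: "?D v = 1" if "v \<in> W" "E v x" for v
  proof -
    have "v \<noteq> x" using that irrV WV by blast
    then have "?D v \<noteq> 0" using depth_zero[OF Wt xW that(1)] by blast
    then show ?thesis using depth_adj_cases[OF Wt xW that(1) xW that(2)] depth_root[OF xW] by simp
  qed
  have Ninfo: "\<exists>a\<in>AA - A2. a \<in> W \<and> E n a \<and> E a n \<and> E x a \<and> ?D a = 1 \<and> ?D n = 2" if n: "n \<in> NN" "n \<in> W" for n
  proof -
    obtain a where a: "a \<in> AA - A2" "E a n" "E n a" using NN_a[OF n(1)] by blast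
    have aV: "a \<in> V" using a AA_M MV by blast
    have aW: "a \<in> W" using clos[OF n(2) aV a(2)] a by blast
    have xa: "E x a" using AA_in_W_adj[OF x] a aW W_def by blast
    have da: "?D a = 1" using adjx[OF aW] symV[OF xV aV xa] by simp
    have "n \<noteq> x" using n NN_X x by blast
    then have "?D n \<noteq> 0" using depth_zero[OF Wt xW n(2)] by blast
    then have "?D n = 2" using depth_adj_cases[OF Wt xW n(2) aW a(3)] da by simp
    then show ?thesis using a aW xa da by blast
  qed
  have S0W: "S0 \<subseteq> W" unfolding S0_def by blast
  have S0_cases: "s \<in> M - AA \<or> s = x \<or> s \<in> NN" if "s \<in> S0" for s
    using that XW unfolding S0_def init_eq by blast
  have MA_S0: "s \<in> S0" if "s \<in> M" "s \<notin> AA" "s \<in> W" for s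
    using that unfolding S0_def init_eq by blast
  have NN_S0: "s \<in> S0" if "s \<in> NN" "s \<in> W" for s
    using that unfolding S0_def init_eq by blast
  have dom: "dominating W E S0"
    unfolding dominating_def
  proof (intro conjI S0W ballI)
    fix y assume yW: "y \<in> W"
    have yV: "y \<in> V" using yW WV by blast
    show "y \<in> S0 \<or> (\<exists>s\<in>S0. E y s)"
    proof (cases "y = x")
      case True then show ?thesis using xS0 by blast
    next
      case yx: False
      show ?thesis
      proof (cases "y \<in> M")
        case True
        show ?thesis
        proof (cases "y \<in> AA")
          case False then show ?thesis using MA_S0 True yW by blast
        next
          case yA: True
          have "E x y" using AA_in_W_adj[OF x yA] yW W_def by blast
          then have "E y x" using symV[OF xV yV] by blast
          then show ?thesis using xS0 by blast
        qed
      next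
        case yM: False
        obtain m where m: "m \<in> M" "E y m" using domM yV yM unfolding dominating_def by blast
        show ?thesis
        proof (cases "\<exists>m'\<in>M. E y m' \<and> m' \<notin> AA")
          case True
          then obtain m' where m': "m' \<in> M" "E y m'" "m' \<notin> AA" by blast
          have m'V: "m' \<in> V" using m' MV by blast
          have "m' \<in> W" using clos[OF yW m'V symV[OF yV m'V m'(2)]] m' A2_AA by blast
          then show ?thesis using MA_S0 m' by blast
        next
          case False
          then have mA: "m \<in> AA" using m by blast
          have mV: "m \<in> V" using m MV by blast
          show ?thesis
          proof (cases "\<forall>s\<in>M. E y s \<longrightarrow> s = m")
            case True
            have "y \<in> N1 V E M" by (rule N1I[of y V M m E, OF yV yM m(1) mV m(2)]) (use True in blast)
            moreover have "y \<in> nbrs V E AA" using in_nbrs mA symV[OF yV mV m(2)] yV by blast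
            ultimately show ?thesis using NN_S0 yW by blast
          next
            case False
            then obtain m' where m': "m' \<in> M" "E y m'" "m' \<noteq> m" by blast
            have m'A: "m' \<in> AA" using m' \<open>\<not> (\<exists>m'\<in>M. E y m' \<and> m' \<notin> AA)\<close> by blast
            have m'V: "m' \<in> V" using m' MV by blast
            have nA2: "m \<notin> A2" "m' \<notin> A2" using boundary[OF x _ _ m(2)] boundary[OF x _ _ m'(2)] yW W_def yx by auto
            have mW: "m \<in> W" "m' \<in> W" using clos[OF yW mV symV[OF yV mV m(2)]] clos[OF yW m'V symV[OF yV m'V m'(2)]] nA2 by auto
            have "E x m" "E x m'" using AA_in_W_adj[OF x] mA m'A mW W_def by auto
            then have dm: "?D m = 1" "?D m' = 1" using adjx mW symV xV mV m'V by auto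
            have "?D y \<noteq> 0" using depth_zero[OF Wt xW yW] yx by blast
            then have "?D y = 2" using depth_adj_cases[OF Wt xW yW mW(1) m(2)] dm by simp
            then have "m = m'" using depth_parent_unique[OF Wt xW yW mW(1) m(2) mW(2) m'(2)] dm by simp
            then show ?thesis using m' by blast
          qed
        qed
      qed
    qed
  qed
  have inv: "v \<noteq> x \<and> (\<forall>p\<in>W. E v p \<and> ?D p < ?D v \<longrightarrow> p \<notin> S0)"
    if v: "v \<in> S0" "v \<notin> crit W E S0" for v
  proof -
    have vdom: "dominating W E (S0 - {v})" using v by (simp add: crit_def)
    have vW: "v \<in> W" using v S0W by blast
    have vV: "v \<in> V" using vW WV by blast
    obtain s where s: "s \<in> S0 - {v}" "E v s" using vdom vW unfolding dominating_def by blast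
    have sW: "s \<in> W" using s S0W by blast
    have sV: "s \<in> V" using sW WV by blast
    have vx: "v \<noteq> x"
    proof
      assume vx: "v = x"
      have "s \<in> M - AA \<or> s = x \<or> s \<in> NN" using S0_cases s by blast
      then show False
      proof (elim disjE)
        assume sM: "s \<in> M - AA"
        have "s \<in> nbrs V E X" using in_nbrs sV s x vx by blast
        then show False using sM AA_eq by blast
      next
        assume "s = x" then show False using s vx by blast
      next
        assume sN: "s \<in> NN"
        have "?D s = 2" using Ninfo[OF sN sW] by blast
        moreover have "?D s = 1" using adjx[OF sW] symV[OF xV sV] s vx by blast
        ultimately show False by simp
      qed
    qed
    have vN: "v \<notin> NN"
    proof
      assume vN: "v \<in> NN"
      obtain a where a: "a \<in> AA - A2" "E v a" "?D v = 2" using Ninfo[OF vN vW] by blast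
      have aV: "a \<in> V" using a AA_M MV by blast
      have "s \<in> M - AA \<or> s = x \<or> s \<in> NN" using S0_cases s by blast
      then show False
      proof (elim disjE)
        assume sM: "s \<in> M - AA"
        have "s = a" using N1_unique[of v V E M s a] vN sM a aV sV s AA_M by blast
        then show False using sM a by blast
      next
        assume "s = x"
        then have "?D v = 1" using adjx[OF vW] s by blast
        then show False using a by simp
      next
        assume sN: "s \<in> NN"
        have "?D s = 2" using Ninfo[OF sN sW] by blast
        then show False using depth_adj_neq[OF Wt xW vW sW] s a by simp
      qed
    qed
    have vMA: "v \<in> M" "v \<notin> AA" using S0_cases[OF v(1)] vx vN by auto
    have "v \<in> crit V E M" using critM vMA by simp
    then have "\<not> dominating V E (M - {v})" by (simp add: crit_def)
    then obtain z where z: "z \<in> V" "z \<notin> M - {v}" "\<forall>s\<in>M - {v}. \<not> E z s"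
      using not_dom_witness[of "M - {v}" V E] MV by blast
    have vnotnbrX: "\<not> E x' v" if "x' \<in> X" for x'
      using that vMA AA_eq in_nbrs vV by blast
    have zv: "z \<noteq> v"
    proof
      assume zv: "z = v"
      obtain s' where s': "s' \<in> S0 - {v}" "E z s'"
        using vdom z(1) zv vW unfolding dominating_def by blast
      have s'V: "s' \<in> V" using s' S0W WV by blast
      have "s' \<in> M - AA \<or> s' = x \<or> s' \<in> NN" using S0_cases s' by blast
      then show False
      proof (elim disjE)
        assume "s' \<in> M - AA" then show False using z s' zv by blast
      next
        assume "s' = x"
        then show False using vnotnbrX[OF x] symV[OF vV xV] s' zv by blast
      next
        assume sN: "s' \<in> NN"
        obtain a where a: "a \<in> AA - A2" "E s' a" using NN_a[OF sN] by blast
        have aV: "a \<in> V" using a AA_M MV by blast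
        have "E s' v" using symV[OF vV s'V] s' zv by blast
        then have "v = a" using N1_unique[of s' V E M v a] sN a aV vV vMA AA_M by blast
        then show False using vMA a by blast
      qed
    qed
    have zM: "z \<notin> M" using z zv by blast
    have ezv: "E z v"
    proof -
      obtain s' where "s' \<in> M" "E z s'" using domM z(1) zM unfolding dominating_def by blast
      then show ?thesis using z by blast
    qed
    have zA2: "z \<notin> A2" using zM A2M by blast
    have zW: "z \<in> W" using clos[OF vW z(1) ezv zA2] .
    have zx: "z \<noteq> x" using vnotnbrX[OF x] ezv by blast
    have zN: "z \<notin> NN"
    proof
      assume zN: "z \<in> NN"
      obtain a where a: "a \<in> AA - A2" "E z a" using NN_a[OF zN] by blast
      have aV: "a \<in> V" using a AA_M MV by blast
      have "v = a" using N1_unique[of z V E M v a] zN a aV vV vMA AA_M ezv by blast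
      then show False using vMA a by blast
    qed
    have zS0: "z \<notin> S0" using S0_cases zM zx zN by blast
    obtain s' where s': "s' \<in> S0 - {v}" "E z s'"
    proof -
      have "z \<in> S0 - {v} \<or> (\<exists>s\<in>S0 - {v}. E z s)" using vdom zW unfolding dominating_def by blast
      then show ?thesis using zS0 that by blast
    qed
    have s'V: "s' \<in> V" using s' S0W WV by blast
    have s'W: "s' \<in> W" using s' S0W by blast
    have dzv: "?D z < ?D v"
    proof -
      have "s' \<in> M - AA \<or> s' = x \<or> s' \<in> NN" using S0_cases s' by blast
      then show ?thesis
      proof (elim disjE)
        assume "s' \<in> M - AA" then show ?thesis using z s' by blast
      next
        assume s'x: "s' = x"
        have dz: "?D z = 1" using adjx[OF zW] s' s'x by blast
        have "?D v \<noteq> 0" using depth_zero[OF Wt xW vW] vx by blast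
        then have "?D v = 2" using depth_adj_cases[OF Wt xW vW zW symV[OF z(1) vV ezv]] dz by simp
        then show ?thesis using dz by simp
      next
        assume sN: "s' \<in> NN"
        obtain a where a: "a \<in> AA - A2" "a \<in> W" "E s' a" "?D a = 1" "?D s' = 2"
          using Ninfo[OF sN s'W] by blast
        have ezs: "E s' z" using symV[OF z(1) s'V] s' by blast
        have dz: "?D z = 3"
        proof -
          have "?D z \<noteq> 1"
          proof
            assume "?D z = 1"
            then have "z = a" using depth_parent_unique[OF Wt xW s'W zW ezs a(2) a(3)] a by simp
            then show False using zM a AA_M by blast
          qed
          then show ?thesis using depth_adj_cases[OF Wt xW s'W zW ezs] a by auto
        qed
        have "?D v \<noteq> 2"
        proof
          assume "?D v = 2"
          then have "v = s'" using depth_parent_unique[OF Wt xW zW vW ezv s'W s'(2)] dz a(5) by simp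
          then show False using s' by blast
        qed
        then have "?D v = 4" using depth_adj_cases[OF Wt xW vW zW symV[OF z(1) vV ezv]] dz by auto
        then show ?thesis using dz by simp
      qed
    qed
    have "p \<notin> S0" if p: "p \<in> W" "E v p" "?D p < ?D v" for p
    proof -
      have "p = z" using depth_parent_unique[OF Wt xW vW p(1) p(2) zW symV[OF z(1) vV ezv] p(3) dzv] .
      then show ?thesis using zS0 by simp
    qed
    then show ?thesis using vx by blast
  qed
  have "good W E x S0" unfolding good_def using dom xS0 inv by blast
  then show ?thesis using W_def S0_def by simp
qed

end




inductive_cases loopE: "alg2_loop V E A2 (x # xs) M Mf"

context alg2_ctx
begin

abbreviation "M0 \<equiv> alg2_init V E M X"

lemma finV: "finite V" using tree by (simp add: is_tree_def)

lemma M0_V: "M0 \<subseteq> V"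
  unfolding init_eq using MV XV NN_V by blast

lemma loop:
  "distinct xs \<Longrightarrow> set xs \<subseteq> X \<Longrightarrow> Mc \<subseteq> V \<Longrightarrow> (\<forall>x\<in>set xs. Mc \<inter> Wx x = M0 \<inter> Wx x) \<Longrightarrow>
   alg2_loop_terminates V E A2 xs Mc \<and> (\<exists>Mf. alg2_loop V E A2 xs Mc Mf) \<and>
   (\<forall>Mf. alg2_loop V E A2 xs Mc Mf \<longrightarrow> Mf \<subseteq> V \<and> card Mc \<le> card Mf \<and>
        (\<forall>v. (\<forall>x\<in>set xs. v \<notin> Wx x) \<longrightarrow> (v \<in> Mf \<longleftrightarrow> v \<in> Mc)) \<and>
        (\<forall>x\<in>set xs. min_dominating (Wx x) E (Mf \<inter> Wx x) \<and> x \<in> Mf))"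
proof (induction xs arbitrary: Mc)
  case Nil
  have "alg2_loop V E A2 [] Mc Mc" by (rule alg2_loop.nil)
  moreover have "Mf = Mc" if "alg2_loop V E A2 [] Mc Mf" for Mf
    using that by (cases rule: alg2_loop.cases) auto
  ultimately show ?case using Nil by auto
next
  case (Cons x xs)
  have x: "x \<in> X" using Cons.prems by simp
  define W where "W = Wx x"
  define S0 where "S0 = Mc \<inter> W"
  have S0eq: "S0 = M0 \<inter> W" using Cons.prems S0_def W_def by simp
  have g: "good W E x S0" using good_init[OF x] S0eq W_def by simp
  have Wt: "is_tree W E" using Wx_tree[OF x] W_def by simp
  have xW: "x \<in> W" using x_in_Wx[OF x] W_def by simp
  have WV: "W \<subseteq> V" using Wx_V W_def by simp
  have disj: "W \<inter> Wx x' = {}" if "x' \<in> set xs" for x'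
    using Wx_disj[OF x, of x'] Cons.prems that W_def by auto
  have R: "min_dominating W E R \<and> x \<in> R \<and> card S0 \<le> card R \<and> R \<subseteq> W"
    if "alg1_result W E x S0 R" for R
    using alg1_props[OF Wt xW that g] .
  have next_ok: "distinct xs \<and> set xs \<subseteq> X \<and> (Mc - S0) \<union> R \<subseteq> V \<and>
      (\<forall>x'\<in>set xs. ((Mc - S0) \<union> R) \<inter> Wx x' = M0 \<inter> Wx x')"
    if "alg1_result W E x S0 R" for R
  proof -
    have RW: "R \<subseteq> W" using R[OF that] by blast
    have "((Mc - S0) \<union> R) \<inter> Wx x' = M0 \<inter> Wx x'" if x': "x' \<in> set xs" for x'
    proof -
      have "((Mc - S0) \<union> R) \<inter> Wx x' = Mc \<inter> Wx x'"
        using disj[OF x'] RW S0_def by blast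
      then show ?thesis using Cons.prems x' by simp
    qed
    then show ?thesis using Cons.prems RW WV by auto
  qed
  have term1: "alg1_terminates W E x S0" using alg1_term[OF Wt xW g] .
  have IHr: "alg2_loop_terminates V E A2 xs ((Mc - S0) \<union> R) \<and> (\<exists>Mf. alg2_loop V E A2 xs ((Mc - S0) \<union> R) Mf) \<and>
   (\<forall>Mf. alg2_loop V E A2 xs ((Mc - S0) \<union> R) Mf \<longrightarrow> Mf \<subseteq> V \<and> card ((Mc - S0) \<union> R) \<le> card Mf \<and>
        (\<forall>v. (\<forall>x\<in>set xs. v \<notin> Wx x) \<longrightarrow> (v \<in> Mf \<longleftrightarrow> v \<in> ((Mc - S0) \<union> R))) \<and>
        (\<forall>x\<in>set xs. min_dominating (Wx x) E (Mf \<inter> Wx x) \<and> x \<in> Mf))"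
    if RA: "alg1_result W E x S0 R" for R
  proof -
    note n = next_ok[OF RA]
    have a: "distinct xs" using n by (rule conjunct1)
    have b: "set xs \<subseteq> X" using conjunct2[OF n] by (rule conjunct1)
    have c: "(Mc - S0) \<union> R \<subseteq> V" using conjunct2[OF conjunct2[OF n]] by (rule conjunct1)
    have d: "\<forall>x'\<in>set xs. ((Mc - S0) \<union> R) \<inter> Wx x' = M0 \<inter> Wx x'"
      using conjunct2[OF conjunct2[OF n]] by (rule conjunct2)
    show ?thesis by (rule Cons.IH[OF a b c d])
  qed
  have Teq: "alg2_loop_terminates V E A2 (x # xs) Mc = (alg1_terminates W E x S0 \<and>
     (\<forall>R. alg1_result W E x S0 R \<longrightarrow> alg2_loop_terminates V E A2 xs ((Mc - S0) \<union> R)))"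
    by (simp add: S0_def W_def)
  have T: "alg2_loop_terminates V E A2 (x # xs) Mc"
    unfolding Teq using term1 IHr by blast
  obtain R0 where R0: "alg1_result W E x S0 R0" using alg1_exists[OF Wt xW g] by blast
  obtain Mf0 where "alg2_loop V E A2 xs ((Mc - S0) \<union> R0) Mf0" using IHr[OF R0] by blast
  then have Ex: "\<exists>Mf. alg2_loop V E A2 (x # xs) Mc Mf"
    using alg2_loop.cons[of V E A2 x Mc R0 xs Mf0] R0 unfolding S0_def W_def by blast
  have P: "Mf \<subseteq> V \<and> card Mc \<le> card Mf \<and>
        (\<forall>v. (\<forall>x\<in>set (x # xs). v \<notin> Wx x) \<longrightarrow> (v \<in> Mf \<longleftrightarrow> v \<in> Mc)) \<and>
        (\<forall>x\<in>set (x # xs). min_dominating (Wx x) E (Mf \<inter> Wx x) \<and> x \<in> Mf)"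
    if L: "alg2_loop V E A2 (x # xs) Mc Mf" for Mf
  proof -
    obtain R1 where R1': "alg1_result (Wx x) E x (Mc \<inter> Wx x) R1"
      and L1': "alg2_loop V E A2 xs ((Mc - (Mc \<inter> Wx x)) \<union> R1) Mf"
      by (rule loopE[OF L])
    have R1: "alg1_result W E x S0 R1" using R1' unfolding S0_def W_def .
    have L1: "alg2_loop V E A2 xs ((Mc - S0) \<union> R1) Mf" using L1' unfolding S0_def W_def .
    define Mc1 where "Mc1 = (Mc - S0) \<union> R1"
    have RR: "min_dominating W E R1" "x \<in> R1" "card S0 \<le> card R1" "R1 \<subseteq> W" using R[OF R1] by auto
    note Iall = conjunct2[OF conjunct2[OF IHr[OF R1]], rule_format, OF L1, folded Mc1_def]
    have I1: "Mf \<subseteq> V" using Iall by (rule conjunct1)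
    have I2: "card Mc1 \<le> card Mf" using conjunct2[OF Iall] by (rule conjunct1)
    have I3: "\<forall>v. (\<forall>x\<in>set xs. v \<notin> Wx x) \<longrightarrow> (v \<in> Mf \<longleftrightarrow> v \<in> Mc1)"
      using conjunct2[OF conjunct2[OF Iall]] by (rule conjunct1)
    have I4: "\<forall>x\<in>set xs. min_dominating (Wx x) E (Mf \<inter> Wx x) \<and> x \<in> Mf"
      using conjunct2[OF conjunct2[OF Iall]] by (rule conjunct2)
    have finMc: "finite Mc" using finite_subset[OF Cons.prems(3) finV] .
    have finR: "finite R1" using finite_subset[OF _ finV, of R1] RR(4) WV by blast
    have c1: "card Mc1 = card (Mc - S0) + card R1"
      unfolding Mc1_def by (rule card_Un_disjoint) (use finMc finR RR S0_def in auto)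
    have S0Mc: "S0 \<subseteq> Mc" using S0_def by blast
    have finS0: "finite S0" using S0Mc finMc finite_subset by blast
    have c0a: "card (Mc - S0) = card Mc - card S0" using card_Diff_subset[OF finS0 S0Mc] .
    have c0b: "card S0 \<le> card Mc" using card_mono[OF finMc S0Mc] .
    have c0: "card Mc = card (Mc - S0) + card S0" using c0a c0b by linarith
    have card: "card Mc \<le> card Mf" using c1 c0 RR I2 by linarith
    have outside: "v \<in> Mf \<longleftrightarrow> v \<in> Mc" if vo: "\<forall>x\<in>set (x # xs). v \<notin> Wx x" for v
    proof -
      have "v \<in> Mf \<longleftrightarrow> v \<in> Mc1" using I3 vo by simp
      moreover have "v \<notin> W" using vo W_def by simp
      ultimately show ?thesis using Mc1_def S0_def RR by blast
    qed
    have inW: "v \<in> Mf \<longleftrightarrow> v \<in> R1" if vW: "v \<in> W" for v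
    proof -
      have "\<forall>x'\<in>set xs. v \<notin> Wx x'" using disj vW by blast
      then have "v \<in> Mf \<longleftrightarrow> v \<in> Mc1" using I3 by blast
      then show ?thesis using vW Mc1_def S0_def by blast
    qed
    have "Mf \<inter> W = R1" using inW RR by blast
    then have "min_dominating W E (Mf \<inter> W) \<and> x \<in> Mf" using RR inW xW by simp
    then have "\<forall>x'\<in>set (x # xs). min_dominating (Wx x') E (Mf \<inter> Wx x') \<and> x' \<in> Mf"
      using I4 W_def by simp
    then show ?thesis using I1 card outside by blast
  qed
  show ?case using T Ex P by blast
qed

abbreviation "Wall \<equiv> (\<Union>x\<in>X. Wx x)"

lemma clos': "y \<in> Wx x \<Longrightarrow> x \<in> X \<Longrightarrow> z \<in> V \<Longrightarrow> E z y \<Longrightarrow> z \<notin> A2 \<Longrightarrow> z \<in> Wx x"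
  using Wx_closure XV by blast

lemma M0_outside: "v \<in> M0 \<Longrightarrow> v \<notin> Wall \<Longrightarrow> v \<in> M \<and> v \<notin> A2"
proof -
  assume v: "v \<in> M0" "v \<notin> Wall"
  have "v \<notin> X" using v x_in_Wx by blast
  moreover have "v \<notin> NN"
  proof
    assume vN: "v \<in> NN"
    obtain a where a: "a \<in> AA - A2" "E a v" "E v a" using NN_a[OF vN] by blast
    obtain x' where x': "x' \<in> X" "E x' a" "E a x'" using AA_x a by blast
    have aW: "a \<in> Wx x'" using AA1_in_W a x' by blast
    have "v \<notin> A2" using vN NN_M A2M by blast
    then have "v \<in> Wx x'" using clos'[OF aW x'(1) _ a(3)] vN NN_V by blast
    then show False using v x' by blast
  qed
  ultimately show ?thesis using v A2_AA unfolding init_eq by blast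
qed

lemma M_outside: "v \<in> M \<Longrightarrow> v \<notin> A2 \<Longrightarrow> v \<notin> Wall \<Longrightarrow> v \<in> M0"
proof -
  assume v: "v \<in> M" "v \<notin> A2" "v \<notin> Wall"
  have "v \<notin> AA"
  proof
    assume "v \<in> AA"
    then obtain x' where x': "x' \<in> X" "E x' v" "E v x'" using AA_x by blast
    have "v \<in> Wx x'" using AA1_in_W \<open>v \<in> AA\<close> v x' by blast
    then show False using v x' by blast
  qed
  then show ?thesis using v unfolding init_eq by blast
qed

lemma global:
  assumes MfV: "Mf \<subseteq> V"
    and out: "\<And>v. (\<forall>x\<in>X. v \<notin> Wx x) \<Longrightarrow> (v \<in> Mf \<longleftrightarrow> v \<in> M0)"
    and ins: "\<And>x. x \<in> X \<Longrightarrow> min_dominating (Wx x) E (Mf \<inter> Wx x) \<and> x \<in> Mf"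
  shows "min_dominating V E Mf"
proof -
  have out': "v \<in> Mf \<longleftrightarrow> v \<in> M0" if vW: "v \<notin> Wall" for v
  proof -
    have "\<forall>x\<in>X. v \<notin> Wx x" using vW by simp
    then show ?thesis by (rule out)
  qed
  have MfA2: "a \<notin> Mf" if aA: "a \<in> A2" for a
  proof
    assume aM: "a \<in> Mf"
    have "a \<notin> Wx x" if "x \<in> X" for x using Wx_A2[of x] XV that aA by blast
    then have aW: "a \<notin> Wall" by blast
    then have "a \<in> M0" using out'[OF aW] aM by simp
    then show False using M0_outside[OF _ aW] aA by blast
  qed
  have MfM: "v \<in> M \<and> v \<notin> A2" if vM: "v \<in> Mf" and vW: "v \<notin> Wall" for v
  proof -
    have "v \<in> M0" using out'[OF vW] vM by simp
    then show ?thesis using M0_outside[OF _ vW] by blast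
  qed
  have toMf: "v \<in> Mf" if "v \<in> M" "v \<notin> A2" "v \<notin> Wall" for v
  proof -
    have "v \<in> M0" by (rule M_outside[OF that])
    then show ?thesis using out'[OF that(3)] by simp
  qed
  have dom: "dominating V E Mf"
    unfolding dominating_def
  proof (intro conjI MfV ballI)
    fix y assume yV: "y \<in> V"
    show "y \<in> Mf \<or> (\<exists>s\<in>Mf. E y s)"
    proof (cases "y \<in> Wall")
      case True
      then obtain x where x: "x \<in> X" "y \<in> Wx x" by blast
      have "dominating (Wx x) E (Mf \<inter> Wx x)" using ins[OF x(1)] by (simp add: min_dominating_def)
      then have "y \<in> Mf \<inter> Wx x \<or> (\<exists>s\<in>Mf \<inter> Wx x. E y s)" using x(2) unfolding dominating_def by blast
      then show ?thesis by blast
    next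
      case yW: False
      show ?thesis
      proof (cases "y \<in> A2")
        case True
        then have "y \<in> nbrs V E X" by blast
        then obtain x where x: "x \<in> X" "E x y" unfolding in_nbrs by blast
        have xV: "x \<in> V" using x(1) XV by blast
        have "E y x" using symV[OF xV yV x(2)] .
        moreover have "x \<in> Mf" using ins[OF x(1)] by blast
        ultimately show ?thesis by blast
      next
        case yA2: False
        show ?thesis
        proof (cases "y \<in> M")
          case True
          then show ?thesis using toMf[OF True yA2 yW] by blast
        next
          case yM: False
          obtain m where m: "m \<in> M" "E y m" using domM yV yM unfolding dominating_def by blast
          have notW: "m' \<notin> Wall" if mm: "m' \<in> M" "E y m'" for m'
          proof
            assume "m' \<in> Wall"
            then obtain x where x: "x \<in> X" "m' \<in> Wx x" by blast
            have "y \<in> Wx x" using clos'[OF x(2) x(1) yV mm(2) yA2] .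
            then show False using yW x by blast
          qed
          show ?thesis
          proof (cases "m \<in> A2")
            case False
            have "m \<in> Mf" using toMf[OF m(1) False notW[OF m]] .
            then show ?thesis using m(2) by blast
          next
            case mA2: True
            have mV: "m \<in> V" using m MV by blast
            have "E m y" using symV[OF yV mV m(2)] .
            then have yN1: "y \<notin> N1 V E M" using a2_nbr_not_N1[of m y] mA2 yV by blast
            have "\<not> (\<forall>s\<in>M. E y s \<longrightarrow> s = m)"
            proof
              assume "\<forall>s\<in>M. E y s \<longrightarrow> s = m"
              then have "y \<in> N1 V E M" by (rule N1I[of y V M m E, OF yV yM m(1) mV m(2)])
              then show False using yN1 by blast
            qed
            then obtain m' where m': "m' \<in> M" "E y m'" "m' \<noteq> m" by blast
            have yX: "y \<notin> X" using yW x_in_Wx by blast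
            have yAX: "y \<notin> A2 \<union> X" using yA2 yX by blast
            have m'A2: "m' \<notin> A2"
            proof
              assume m'A: "m' \<in> A2"
              show False using two_A2[OF yV yAX mA2 m'A _ m(2) m'(2)] m'(3) by blast
            qed
            have "m' \<in> Mf" using toMf[OF m'(1) m'A2 notW[OF m'(1,2)]] .
            then show ?thesis using m'(2) by blast
          qed
        qed
      qed
    qed
  qed
  have crit: "\<not> dominating V E (Mf - {v})" if v: "v \<in> Mf" for v
  proof (cases "v \<in> Wall")
    case True
    then obtain x where x: "x \<in> X" "v \<in> Wx x" by blast
    define R where "R = Mf \<inter> Wx x"
    have mR: "min_dominating (Wx x) E R" using ins[OF x(1)] R_def by simp
    have vR: "v \<in> R" using v x R_def by blast
    have "\<not> dominating (Wx x) E (R - {v})" using mR vR unfolding min_dom_iff by blast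
    moreover have "R - {v} \<subseteq> Wx x" using R_def by blast
    ultimately obtain z where z: "z \<in> Wx x" "z \<notin> R - {v}" "\<forall>s\<in>R - {v}. \<not> E z s"
      using not_dom_witness[of "R - {v}" "Wx x" E] by blast
    have zV: "z \<in> V" using z(1) Wx_V by blast
    show ?thesis
    proof (rule not_domI[OF zV])
      show "z \<notin> Mf - {v}" using z(1,2) R_def by blast
      show "\<forall>s\<in>Mf - {v}. \<not> E z s"
      proof (intro ballI notI)
        fix s assume s: "s \<in> Mf - {v}" "E z s"
        have sV: "s \<in> V" using s MfV by blast
        have sA2: "s \<notin> A2" using MfA2 s(1) by blast
        have "s \<in> Wx x" using clos'[OF z(1) x(1) sV symV[OF zV sV s(2)] sA2] .
        then have "s \<in> R - {v}" using s(1) R_def by blast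
        then show False using z(3) s(2) by blast
      qed
    qed
  next
    case vW: False
    have vM: "v \<in> M" "v \<notin> A2" using MfM[OF v vW] by auto
    have vV: "v \<in> V" using vM MV by blast
    have "v \<in> crit V E M" using critM vM by simp
    then have "\<not> dominating V E (M - {v})" by (simp add: crit_def)
    moreover have "M - {v} \<subseteq> V" using MV by blast
    ultimately obtain z where z: "z \<in> V" "z \<notin> M - {v}" "\<forall>s\<in>M - {v}. \<not> E z s"
      using not_dom_witness[of "M - {v}" V E] by blast
    have zadj: "z = v \<or> E z v"
    proof (cases "z \<in> M")
      case True then show ?thesis using z(2) by blast
    next
      case False
      then obtain s where s: "s \<in> M" "E z s" using domM z(1) unfolding dominating_def by blast
      then have "s = v" using z(3) by blast
      then show ?thesis using s(2) by simp
    qed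
    have zW: "z \<notin> Wall"
    proof
      assume "z \<in> Wall"
      then obtain x where x: "x \<in> X" "z \<in> Wx x" by blast
      have "z \<noteq> v" using x vW by blast
      then have ezv: "E z v" using zadj by blast
      have "v \<in> Wx x" using clos'[OF x(2) x(1) vV symV[OF z(1) vV ezv] vM(2)] .
      then show False using vW x by blast
    qed
    show ?thesis
    proof (rule not_domI[OF z(1)])
      show "z \<notin> Mf - {v}"
      proof
        assume zz: "z \<in> Mf - {v}"
        then have "z \<in> M" using MfM zW by blast
        then show False using z(2) zz by blast
      qed
      show "\<forall>s\<in>Mf - {v}. \<not> E z s"
      proof (intro ballI notI)
        fix s assume s: "s \<in> Mf - {v}" "E z s"
        show False
        proof (cases "s \<in> Wall")
          case False
          then have "s \<in> M" using MfM s(1) by blast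
          then show False using z(3) s by blast
        next
          case True
          then obtain x where x: "x \<in> X" "s \<in> Wx x" by blast
          have zA2: "z \<in> A2"
          proof (rule ccontr)
            assume "z \<notin> A2"
            then have "z \<in> Wx x" using clos'[OF x(2) x(1) z(1) s(2)] by blast
            then show False using zW x by blast
          qed
          then have "z \<in> M" using A2M by blast
          then have "z = v" using z(2) by blast
          then show False using zA2 vM(2) by blast
        qed
      qed
    qed
  qed
  show ?thesis unfolding min_dom_iff using dom crit by blast
qed

lemma card_M0: "int (card M) - int (card A2) + int (card X) \<le> int (card M0)"
proof -
  have finM: "finite M" using MV finV finite_subset by blast
  have finX: "finite X" using XV finV finite_subset by blast
  have finN: "finite NN" using NN_V finV finite_subset by blast
  have finA: "finite AA" using AA_M finM finite_subset by blast
  have c1: "card M0 = card ((M \<union> X) - AA) + card NN"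
    unfolding init_eq by (rule card_Un_disjoint) (use finM finX finN NN_M NN_X in auto)
  have c2: "card ((M \<union> X) - AA) = card (M \<union> X) - card AA"
    using AA_M finA by (intro card_Diff_subset) auto
  have c3: "card (M \<union> X) = card M + card X"
    using finM finX XM by (intro card_Un_disjoint) auto
  have c4: "card AA \<le> card (M \<union> X)" using AA_M finM finX by (intro card_mono) auto
  have finA2: "finite A2" using A2_AA finA finite_subset by blast
  have c5: "card (AA - A2) = card AA - card A2" using A2_AA finA2 by (intro card_Diff_subset)
  have c6: "card A2 \<le> card AA" using A2_AA finA by (intro card_mono) auto
  have c7: "card (AA - A2) \<le> card NN"
  proof -
    have ex: "\<exists>n. n \<in> NN \<and> E n a" if aA: "a \<in> AA - A2" for a
    proof -
      have acrit: "a \<in> crit V E M" using aA by blast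
      then have "cnbr V E a \<inter> N1 V E M \<noteq> {}" using aA by (auto simp: a2_def)
      then obtain n where n: "n \<in> cnbr V E a" "n \<in> N1 V E M" by blast
      have "n \<noteq> a" using n aA AA_M unfolding N1_def by blast
      then have en: "E a n" "n \<in> V" using n unfolding cnbr_def nbr_def by auto
      have aV: "a \<in> V" using aA AA_M MV by blast
      have "n \<in> nbrs V E AA" using in_nbrs en aA by blast
      then show ?thesis using n symV[OF aV en(2) en(1)] by blast
    qed
    define g where "g a = (SOME n. n \<in> NN \<and> E n a)" for a
    have g: "g a \<in> NN \<and> E (g a) a" if "a \<in> AA - A2" for a
      using someI_ex[OF ex[OF that]] g_def by simp
    have "inj_on g (AA - A2)"
    proof (rule inj_onI)
      fix a a' assume aa: "a \<in> AA - A2" "a' \<in> AA - A2" "g a = g a'"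
      show "a = a'" using N1_unique[of "g a" V E M a a'] g[OF aa(1)] g[OF aa(2)] aa AA_M MV
        by auto
    qed
    moreover have "g ` (AA - A2) \<subseteq> NN" using g by blast
    ultimately show ?thesis using card_inj_on_le finN by blast
  qed
  show ?thesis using c1 c2 c3 c4 c5 c6 c7 by linarith
qed

end

theorem theorem4p6:
  fixes V :: "'a set" and E :: "'a \<Rightarrow> 'a \<Rightarrow> bool" and M X :: "'a set"
  assumes tree: "is_tree V E"
    and minM: "min_dominating V E M"
    and XN2: "X \<subseteq> N2 V E M"
    and conn: "connected_graph ((nbrs V E X \<inter> a2 V E M) \<union> X) E"
    and indep: "\<forall>u\<in>X. \<forall>v\<in>X. \<not> E u v"
  shows "\<forall>xs. distinct xs \<and> set xs = X \<longrightarrow>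
           alg2_loop_terminates V E (nbrs V E X \<inter> a2 V E M) xs (alg2_init V E M X)
         \<and> (\<exists>Mf. alg2_loop V E (nbrs V E X \<inter> a2 V E M) xs (alg2_init V E M X) Mf)
         \<and> (\<forall>Mf. alg2_loop V E (nbrs V E X \<inter> a2 V E M) xs (alg2_init V E M X) Mf \<longrightarrow>
               min_dominating V E Mf \<and>
               int (card Mf) \<ge> int (card M) - int (card (nbrs V E X \<inter> a2 V E M)) + int (card X))"
proof (intro allI impI)
  fix xs assume xs: "distinct xs \<and> set xs = X"
  interpret alg2_ctx V E M X using assms by (unfold_locales) auto
  have L: "alg2_loop_terminates V E A2 xs M0 \<and> (\<exists>Mf. alg2_loop V E A2 xs M0 Mf) \<and>
   (\<forall>Mf. alg2_loop V E A2 xs M0 Mf \<longrightarrow> Mf \<subseteq> V \<and> card M0 \<le> card Mf \<and>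
        (\<forall>v. (\<forall>x\<in>set xs. v \<notin> Wx x) \<longrightarrow> (v \<in> Mf \<longleftrightarrow> v \<in> M0)) \<and>
        (\<forall>x\<in>set xs. min_dominating (Wx x) E (Mf \<inter> Wx x) \<and> x \<in> Mf))"
    using loop[of xs M0] xs M0_V by blast
  have P: "min_dominating V E Mf \<and>
           int (card Mf) \<ge> int (card M) - int (card A2) + int (card X)"
    if Mf: "alg2_loop V E A2 xs M0 Mf" for Mf
  proof -
    have H: "Mf \<subseteq> V" "card M0 \<le> card Mf"
      "\<And>v. (\<forall>x\<in>X. v \<notin> Wx x) \<Longrightarrow> (v \<in> Mf \<longleftrightarrow> v \<in> M0)"
      "\<And>x. x \<in> X \<Longrightarrow> min_dominating (Wx x) E (Mf \<inter> Wx x) \<and> x \<in> Mf"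
      using L Mf xs by auto
    have "min_dominating V E Mf" using global[OF H(1) H(3) H(4)] by blast
    moreover have "int (card M) - int (card A2) + int (card X) \<le> int (card Mf)"
      using card_M0 H(2) by linarith
    ultimately show ?thesis by simp
  qed
  show "alg2_loop_terminates V E A2 xs M0 \<and> (\<exists>Mf. alg2_loop V E A2 xs M0 Mf) \<and>
     (\<forall>Mf. alg2_loop V E A2 xs M0 Mf \<longrightarrow> min_dominating V E Mf \<and>
        int (card Mf) \<ge> int (card M) - int (card A2) + int (card X))"
    using L P by blast
qed



end
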